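(* Let $A$ be a compact C$^*$-algebra and let $e,w$ be finite rank tripotents in $A$. Suppose that $e$ is minimal and $\|e-w\|=2$. Then $w=-e+P_0(e)(w)$.
   Context: A compact C$^*$-algebra is a C$^*$-algebra which is a $c_0$-direct sum of algebras $K(H_i)$ of compact operators on complex Hilbert spaces; it is regarded as a JB$^*$-triple with $\{a,b,c\}=\frac12(ab^*c+cb^*a)$. A tripotent is $e$ with $\{e,e,e\}=e$ (a partial isometry); $A=A_2(e)\oplus A_1(e)\oplus A_0(e)$ with $A_i(e)$ the $\frac i2$-eigenspace of $L(e,e):z\mapsto\{e,e,z\}$, and $P_0(e)$ is the projection onto $A_0(e)$ along this decomposition. $e$ is minimal if $A_2(e)=\mathbb{C}e\neq\{0\}$; $a\perp b$ means $\{a,b,z\}=0$ for all $z$; a finite rank tripotent is a finite sum of mutually orthogonal minimal tripotents. *)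

theory Defs
  imports "HOL-Analysis.Analysis"
begin

text \<open>Every complex Hilbert space is (isometrically) some l2(I);
 a c0-direct sum of K(H_k), H_k = l2(J_k), is realised as the algebra of compact
 operators on l2(I), I the disjoint union of the J_k (given by a block labelling
 blk :: I => K), which commute with all block projections (block-diagonal compact
 operators).\<close>

type_synonym 'i vec = "'i \<Rightarrow> complex"
type_synonym 'i op = "'i vec \<Rightarrow> 'i vec"

definition l2 :: "'i vec set" where
  "l2 = {x. (\<lambda>i. (cmod (x i))\<^sup>2) summable_on UNIV}"

definition vnorm :: "'i vec \<Rightarrow> real" where
  "vnorm x = sqrt (infsum (\<lambda>i. (cmod (x i))\<^sup>2) UNIV)"

definition cinner :: "'i vec \<Rightarrow> 'i vec \<Rightarrow> complex" where
  "cinner x y = infsum (\<lambda>i. cnj (x i) * y i) UNIV"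

definition bounded_op :: "'i op \<Rightarrow> bool" where
  "bounded_op T \<longleftrightarrow>
     (\<forall>x\<in>l2. T x \<in> l2) \<and> (\<forall>x. x \<notin> l2 \<longrightarrow> T x = (\<lambda>_. 0)) \<and>
     (\<forall>x\<in>l2. \<forall>y\<in>l2. \<forall>c. T (\<lambda>i. c * x i + y i) = (\<lambda>i. c * T x i + T y i)) \<and>
     (\<exists>K. \<forall>x\<in>l2. vnorm (T x) \<le> K * vnorm x)"

definition op_norm :: "'i op \<Rightarrow> real" where
  "op_norm T = Sup {vnorm (T x) | x. x \<in> l2 \<and> vnorm x \<le> 1}"

definition adjoint :: "'i op \<Rightarrow> 'i op" where
  "adjoint T = (THE S. bounded_op S \<and> (\<forall>x\<in>l2. \<forall>y\<in>l2. cinner (T x) y = cinner x (S y)))"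

definition compact_op :: "'i op \<Rightarrow> bool" where
  "compact_op T \<longleftrightarrow> bounded_op T \<and>
     (\<forall>\<epsilon>>0. \<exists>F. finite F \<and> F \<subseteq> l2 \<and>
        (\<forall>x\<in>l2. vnorm x \<le> 1 \<longrightarrow> (\<exists>f\<in>F. vnorm (\<lambda>i. T x i - f i) < \<epsilon>)))"

definition block_proj :: "('i \<Rightarrow> 'k) \<Rightarrow> 'k \<Rightarrow> 'i op" where
  "block_proj blk k x = (\<lambda>i. if blk i = k then x i else 0)"

definition compact_cstar :: "('i \<Rightarrow> 'k) \<Rightarrow> 'i op set" where
  "compact_cstar blk = {T. compact_op T \<and>
     (\<forall>k. \<forall>x\<in>l2. T (block_proj blk k x) = block_proj blk k (T x))}"

definition op_zero :: "'i op" where "op_zero = (\<lambda>x i. 0)"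
definition op_add :: "'i op \<Rightarrow> 'i op \<Rightarrow> 'i op" where "op_add S T = (\<lambda>x i. S x i + T x i)"
definition op_sub :: "'i op \<Rightarrow> 'i op \<Rightarrow> 'i op" where "op_sub S T = (\<lambda>x i. S x i - T x i)"
definition op_neg :: "'i op \<Rightarrow> 'i op" where "op_neg T = (\<lambda>x i. - T x i)"
definition op_smult :: "complex \<Rightarrow> 'i op \<Rightarrow> 'i op" where "op_smult c T = (\<lambda>x i. c * T x i)"

definition op_sum :: "'i op set \<Rightarrow> 'i op" where
  "op_sum F = (\<lambda>x i. \<Sum>u\<in>F. u x i)"

definition trip :: "'i op \<Rightarrow> 'i op \<Rightarrow> 'i op \<Rightarrow> 'i op" where
  "trip a b c = (\<lambda>x i. (a (adjoint b (c x)) i + c (adjoint b (a x)) i) / 2)"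

definition tripotent :: "'i op set \<Rightarrow> 'i op \<Rightarrow> bool" where
  "tripotent A e \<longleftrightarrow> e \<in> A \<and> trip e e e = e"

definition peirce2 :: "'i op set \<Rightarrow> 'i op \<Rightarrow> 'i op set" where
  "peirce2 A e = {z\<in>A. trip e e z = z}"
definition peirce1 :: "'i op set \<Rightarrow> 'i op \<Rightarrow> 'i op set" where
  "peirce1 A e = {z\<in>A. trip e e z = op_smult (1/2) z}"
definition peirce0 :: "'i op set \<Rightarrow> 'i op \<Rightarrow> 'i op set" where
  "peirce0 A e = {z\<in>A. trip e e z = op_zero}"

definition P0 :: "'i op set \<Rightarrow> 'i op \<Rightarrow> 'i op \<Rightarrow> 'i op" where
  "P0 A e w = (THE z. z \<in> peirce0 A e \<and>
      (\<exists>a\<in>peirce2 A e. \<exists>b\<in>peirce1 A e. w = op_add (op_add a b) z))"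

definition minimal_trip :: "'i op set \<Rightarrow> 'i op \<Rightarrow> bool" where
  "minimal_trip A e \<longleftrightarrow> tripotent A e \<and> peirce2 A e = {op_smult c e | c. True} \<and> e \<noteq> op_zero"

definition orth :: "'i op set \<Rightarrow> 'i op \<Rightarrow> 'i op \<Rightarrow> bool" where
  "orth A a b \<longleftrightarrow> (\<forall>z\<in>A. trip a b z = op_zero)"

definition finite_rank_trip :: "'i op set \<Rightarrow> 'i op \<Rightarrow> bool" where
  "finite_rank_trip A w \<longleftrightarrow> (\<exists>F. finite F \<and> (\<forall>u\<in>F. minimal_trip A u) \<and>
      (\<forall>u\<in>F. \<forall>v\<in>F. u \<noteq> v \<longrightarrow> orth A u v) \<and> w = op_sum F)"

end

theory Submission
  imports Defs
begin


lemma l2_iff: "x \<in> l2 \<longleftrightarrow> (\<lambda>i. (cmod (x i))\<^sup>2) summable_on UNIV"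
  by (simp add: l2_def)

lemma l2_zero[simp]: "(\<lambda>i. 0) \<in> l2"
  by (simp add: l2_def)

lemma sq_add_le: "(cmod (a + b))\<^sup>2 \<le> 2 * (cmod a)\<^sup>2 + 2 * (cmod b)\<^sup>2"
proof -
  have "cmod (a + b) \<le> cmod a + cmod b" by (rule norm_triangle_ineq)
  hence "(cmod (a + b))\<^sup>2 \<le> (cmod a + cmod b)\<^sup>2"
    by (simp add: power_mono)
  also have "\<dots> \<le> 2 * (cmod a)\<^sup>2 + 2 * (cmod b)\<^sup>2"
    using sum_squares_bound[of "cmod a" "cmod b"] by (simp add: power2_sum)
  finally show ?thesis .
qed

lemma l2_add: "x \<in> l2 \<Longrightarrow> y \<in> l2 \<Longrightarrow> (\<lambda>i. x i + y i) \<in> l2"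
  unfolding l2_def mem_Collect_eq
  apply (rule summable_on_comparison_test[where f="\<lambda>i. 2 * (cmod (x i))\<^sup>2 + 2 * (cmod (y i))\<^sup>2"])
    apply (intro summable_on_add summable_on_cmult_right; simp)
   apply (rule sq_add_le)
  by simp

lemma l2_scale: "x \<in> l2 \<Longrightarrow> (\<lambda>i. c * x i) \<in> l2"
  unfolding l2_def mem_Collect_eq by (simp add: norm_mult power_mult_distrib summable_on_cmult_right)

lemma l2_lin: "x \<in> l2 \<Longrightarrow> y \<in> l2 \<Longrightarrow> (\<lambda>i. c * x i + y i) \<in> l2"
  using l2_add l2_scale by blast

lemma l2_neg: "x \<in> l2 \<Longrightarrow> (\<lambda>i. - x i) \<in> l2"
  using l2_scale[of x "-1"] by simp

lemma l2_diff: "x \<in> l2 \<Longrightarrow> y \<in> l2 \<Longrightarrow> (\<lambda>i. x i - y i) \<in> l2"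
  using l2_add[OF _ l2_neg, of x y] by simp

definition delta :: "'i \<Rightarrow> 'i vec" where "delta j = (\<lambda>i. if i = j then 1 else 0)"

lemma l2_delta: "delta j \<in> l2"
  unfolding l2_def delta_def mem_Collect_eq
  by (rule finite_nonzero_values_imp_summable_on) (rule finite_subset[of _ "{j}"], auto)

lemma l2_sum: "finite F \<Longrightarrow> (\<And>u. u \<in> F \<Longrightarrow> f u \<in> l2) \<Longrightarrow> (\<lambda>i. \<Sum>u\<in>F. f u i) \<in> l2"
  by (induction F rule: finite_induct) (auto intro: l2_add)

lemma prod_le: "cmod a * cmod b \<le> ((cmod a)\<^sup>2 + (cmod b)\<^sup>2) * (1/2)"
  using sum_squares_bound[of "cmod a" "cmod b"] by simp

lemma prod_summable: "x \<in> l2 \<Longrightarrow> y \<in> l2 \<Longrightarrow> (\<lambda>i. cmod (x i) * cmod (y i)) summable_on UNIV"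
  unfolding l2_def mem_Collect_eq
  apply (rule summable_on_comparison_test[where f="\<lambda>i. ((cmod (x i))\<^sup>2 + (cmod (y i))\<^sup>2) * (1/2)"])
  apply (rule summable_on_cmult_left, rule summable_on_add, assumption+)
  using prod_le by auto

lemma inner_summable: "x \<in> l2 \<Longrightarrow> y \<in> l2 \<Longrightarrow> (\<lambda>i. cnj (x i) * y i) summable_on UNIV"
  apply (rule abs_summable_summable)
  using prod_summable by (simp add: norm_mult)

lemma vnorm_sq: "(vnorm x)\<^sup>2 = infsum (\<lambda>i. (cmod (x i))\<^sup>2) UNIV"
  unfolding vnorm_def by (simp add: infsum_nonneg)

lemma vnorm_nonneg[simp]: "vnorm x \<ge> 0"
  unfolding vnorm_def by (simp add: infsum_nonneg)

lemma vnorm_eq: "vnorm x = sqrt (infsum (\<lambda>i. (cmod (x i))\<^sup>2) UNIV)"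
  by (simp add: vnorm_def)

lemma vnorm_zero_imp: "x \<in> l2 \<Longrightarrow> vnorm x = 0 \<Longrightarrow> x = (\<lambda>i. 0)"
proof
  fix i assume x: "x \<in> l2" and v: "vnorm x = 0"
  have "infsum (\<lambda>i. (cmod (x i))\<^sup>2) UNIV = 0" using v vnorm_sq[of x] by simp
  hence "(cmod (x i))\<^sup>2 = 0"
    using nonneg_infsum_le_0D[of "\<lambda>i. (cmod (x i))\<^sup>2" UNIV i] x by (simp add: l2_iff)
  thus "x i = 0" by simp
qed

lemma amgm: "(t::real) > 0 \<Longrightarrow> a * b \<le> (1/2) * (t * a\<^sup>2 + (1/t) * b\<^sup>2)"
proof -
  assume t: "t > 0"
  have "0 \<le> (t * a - b)\<^sup>2" by simp
  hence h: "2 * (a * b) * t \<le> t * (t * a\<^sup>2) + b\<^sup>2" by (simp add: power2_eq_square algebra_simps)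
  have e: "t * a\<^sup>2 + (1/t) * b\<^sup>2 = (t * (t * a\<^sup>2) + b\<^sup>2) / t" using t by (simp add: field_simps power2_eq_square)
  have "2 * (a * b) \<le> (t * (t * a\<^sup>2) + b\<^sup>2) / t" using h t by (simp add: pos_le_divide_eq)
  hence "2 * (a * b) \<le> t * a\<^sup>2 + (1/t) * b\<^sup>2" by (subst e)
  from mult_left_mono[OF this, of "1/2"] show ?thesis by simp
qed

lemma cs_core:
  assumes x: "x \<in> l2" and y: "y \<in> l2"
  shows "infsum (\<lambda>i. cmod (x i) * cmod (y i)) UNIV \<le> vnorm x * vnorm y"
proof -
  define X where "X = infsum (\<lambda>i. (cmod (x i))\<^sup>2) UNIV"
  define Y where "Y = infsum (\<lambda>i. (cmod (y i))\<^sup>2) UNIV"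
  have X0: "X \<ge> 0" unfolding X_def by (simp add: infsum_nonneg)
  have Y0: "Y \<ge> 0" unfolding Y_def by (simp add: infsum_nonneg)
  have sx: "(\<lambda>i. (cmod (x i))\<^sup>2) summable_on UNIV" using x by (simp add: l2_iff)
  have sy: "(\<lambda>i. (cmod (y i))\<^sup>2) summable_on UNIV" using y by (simp add: l2_iff)
  have vx: "vnorm x = sqrt X" by (simp add: vnorm_def X_def)
  have vy: "vnorm y = sqrt Y" by (simp add: vnorm_def Y_def)
  show ?thesis
  proof (cases "X = 0 \<or> Y = 0")
    case True
    then have "x = (\<lambda>i. 0) \<or> y = (\<lambda>i. 0)"
      using vnorm_zero_imp[OF x] vnorm_zero_imp[OF y] vx vy by auto
    then show ?thesis by auto
  next
    case False
    then have Xp: "X > 0" and Yp: "Y > 0" using X0 Y0 by auto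
    define t where "t = sqrt Y / sqrt X"
    have tp: "t > 0" using Xp Yp by (simp add: t_def)
    have s1: "(\<lambda>i. t * (cmod (x i))\<^sup>2) summable_on UNIV" by (rule summable_on_cmult_right[OF sx])
    have s2: "(\<lambda>i. (1/t) * (cmod (y i))\<^sup>2) summable_on UNIV" by (rule summable_on_cmult_right[OF sy])
    have s3: "(\<lambda>i. t * (cmod (x i))\<^sup>2 + (1/t) * (cmod (y i))\<^sup>2) summable_on UNIV"
      by (rule summable_on_add[OF s1 s2])
    have "infsum (\<lambda>i. cmod (x i) * cmod (y i)) UNIV
        \<le> infsum (\<lambda>i. (1/2) * (t * (cmod (x i))\<^sup>2 + (1/t) * (cmod (y i))\<^sup>2)) UNIV"
      apply (rule infsum_mono)
        apply (rule prod_summable[OF x y])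
       apply (rule summable_on_cmult_right[OF s3])
      using amgm[OF tp] by blast
    also have "\<dots> = (1/2) * (t * X + (1/t) * Y)"
    proof -
      have "infsum (\<lambda>i. (1/2) * (t * (cmod (x i))\<^sup>2 + (1/t) * (cmod (y i))\<^sup>2)) UNIV
          = (1/2) * infsum (\<lambda>i. (t * (cmod (x i))\<^sup>2 + (1/t) * (cmod (y i))\<^sup>2)) UNIV"
        by (rule infsum_cmult_right) (use s3 in simp)
      also have "infsum (\<lambda>i. (t * (cmod (x i))\<^sup>2 + (1/t) * (cmod (y i))\<^sup>2)) UNIV
          = infsum (\<lambda>i. t * (cmod (x i))\<^sup>2) UNIV + infsum (\<lambda>i. (1/t) * (cmod (y i))\<^sup>2) UNIV"
        by (rule infsum_add[OF s1 s2])
      also have "infsum (\<lambda>i. t * (cmod (x i))\<^sup>2) UNIV = t * X"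
        unfolding X_def by (rule infsum_cmult_right) (use sx in simp)
      also have "infsum (\<lambda>i. (1/t) * (cmod (y i))\<^sup>2) UNIV = (1/t) * Y"
        unfolding Y_def by (rule infsum_cmult_right) (use sy in simp)
      finally show ?thesis .
    qed
    also have "\<dots> = sqrt X * sqrt Y"
    proof -
      have sX: "sqrt X * sqrt X = X" using X0 by simp
      have sY: "sqrt Y * sqrt Y = Y" using Y0 by simp
      have nX: "sqrt X \<noteq> 0" "sqrt Y \<noteq> 0" using Xp Yp by auto
      have "t * X = sqrt Y / sqrt X * (sqrt X * sqrt X)" by (simp add: sX t_def X0)
      also have "\<dots> = sqrt X * sqrt Y" using nX by (simp add: field_simps)
      finally have "t * X = sqrt X * sqrt Y" .
      moreover have "(1/t) * Y = sqrt X / sqrt Y * (sqrt Y * sqrt Y)" by (simp add: sY t_def Y0)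
      moreover have "sqrt X / sqrt Y * (sqrt Y * sqrt Y) = sqrt X * sqrt Y" using nX by (simp add: field_simps)
      ultimately show ?thesis by simp
    qed
    finally show ?thesis by (simp add: vx vy)
  qed
qed

lemma l2_summ: "x \<in> l2 \<Longrightarrow> (\<lambda>i. (cmod (x i))\<^sup>2) summable_on UNIV"
  by (simp add: l2_iff)

lemma cinner_cs: "x \<in> l2 \<Longrightarrow> y \<in> l2 \<Longrightarrow> cmod (cinner x y) \<le> vnorm x * vnorm y"
proof -
  assume x: "x \<in> l2" and y: "y \<in> l2"
  have "cmod (cinner x y) \<le> infsum (\<lambda>i. cmod (cnj (x i) * y i)) UNIV"
    unfolding cinner_def
    apply (rule norm_infsum_bound)
    using prod_summable[OF x y] by (simp add: norm_mult)
  also have "\<dots> = infsum (\<lambda>i. cmod (x i) * cmod (y i)) UNIV" by (simp add: norm_mult)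
  also have "\<dots> \<le> vnorm x * vnorm y" by (rule cs_core[OF x y])
  finally show ?thesis .
qed

lemma vnorm_triangle: "x \<in> l2 \<Longrightarrow> y \<in> l2 \<Longrightarrow> vnorm (\<lambda>i. x i + y i) \<le> vnorm x + vnorm y"
proof -
  assume x: "x \<in> l2" and y: "y \<in> l2"
  have sx: "(\<lambda>i. (cmod (x i))\<^sup>2) summable_on UNIV" using x by (simp add: l2_iff)
  have sy: "(\<lambda>i. (cmod (y i))\<^sup>2) summable_on UNIV" using y by (simp add: l2_iff)
  have sp: "(\<lambda>i. 2 * (cmod (x i) * cmod (y i))) summable_on UNIV"
    by (rule summable_on_cmult_right[OF prod_summable[OF x y]])
  have s1: "(\<lambda>i. (cmod (x i))\<^sup>2 + (cmod (y i))\<^sup>2) summable_on UNIV" by (rule summable_on_add[OF sx sy])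
  have "infsum (\<lambda>i. (cmod (x i + y i))\<^sup>2) UNIV
      \<le> infsum (\<lambda>i. ((cmod (x i))\<^sup>2 + (cmod (y i))\<^sup>2) + 2 * (cmod (x i) * cmod (y i))) UNIV"
  proof (rule infsum_mono)
    show "(\<lambda>i. (cmod (x i + y i))\<^sup>2) summable_on UNIV" using l2_add[OF x y] by (simp add: l2_iff)
    show "(\<lambda>i. ((cmod (x i))\<^sup>2 + (cmod (y i))\<^sup>2) + 2 * (cmod (x i) * cmod (y i))) summable_on UNIV"
      by (rule summable_on_add[OF s1 sp])
    fix i
    have "cmod (x i + y i) \<le> cmod (x i) + cmod (y i)" by (rule norm_triangle_ineq)
    hence "(cmod (x i + y i))\<^sup>2 \<le> (cmod (x i) + cmod (y i))\<^sup>2" by (simp add: power_mono)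
    thus "(cmod (x i + y i))\<^sup>2 \<le> ((cmod (x i))\<^sup>2 + (cmod (y i))\<^sup>2) + 2 * (cmod (x i) * cmod (y i))"
      by (simp add: power2_sum)
  qed
  also have "\<dots> = (infsum (\<lambda>i. (cmod (x i))\<^sup>2) UNIV + infsum (\<lambda>i. (cmod (y i))\<^sup>2) UNIV)
       + 2 * infsum (\<lambda>i. cmod (x i) * cmod (y i)) UNIV"
    by (simp add: infsum_add[OF s1 sp] infsum_add[OF sx sy] infsum_cmult_right[OF prod_summable[OF x y]])
  also have "\<dots> \<le> ((vnorm x)\<^sup>2 + (vnorm y)\<^sup>2) + 2 * (vnorm x * vnorm y)"
    using cs_core[OF x y] by (simp add: vnorm_sq)
  also have "\<dots> = (vnorm x + vnorm y)\<^sup>2" by (simp add: power2_sum)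
  finally have "(vnorm (\<lambda>i. x i + y i))\<^sup>2 \<le> (vnorm x + vnorm y)\<^sup>2" by (simp add: vnorm_sq)
  thus ?thesis by (rule power2_le_imp_le) simp
qed

lemma vnorm_scale: "x \<in> l2 \<Longrightarrow> vnorm (\<lambda>i. c * x i) = cmod c * vnorm x"
proof -
  assume x: "x \<in> l2"
  have "infsum (\<lambda>i. (cmod (c * x i))\<^sup>2) UNIV = (cmod c)\<^sup>2 * infsum (\<lambda>i. (cmod (x i))\<^sup>2) UNIV"
    by (simp add: norm_mult power_mult_distrib infsum_cmult_right[OF l2_summ[OF x]])
  thus ?thesis unfolding vnorm_def by (simp add: real_sqrt_mult)
qed

lemma vnorm_neg: "vnorm (\<lambda>i. - x i) = vnorm x"
  unfolding vnorm_def by simp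

lemma vnorm_diff_sym: "vnorm (\<lambda>i. x i - y i) = vnorm (\<lambda>i. y i - x i)"
  unfolding vnorm_def by (simp add: norm_minus_commute)

lemma vnorm_zero[simp]: "vnorm (\<lambda>i. 0) = 0"
  unfolding vnorm_def by simp

lemma cinner_self: "x \<in> l2 \<Longrightarrow> cinner x x = complex_of_real ((vnorm x)\<^sup>2)"
proof -
  assume x: "x \<in> l2"
  have "((\<lambda>i. complex_of_real ((cmod (x i))\<^sup>2)) has_sum complex_of_real (infsum (\<lambda>i. (cmod (x i))\<^sup>2) UNIV)) UNIV"
    by (rule has_sum_of_real) (use l2_summ[OF x] in simp)
  hence "infsum (\<lambda>i. complex_of_real ((cmod (x i))\<^sup>2)) UNIV = complex_of_real ((vnorm x)\<^sup>2)"
    by (simp add: infsumI vnorm_sq)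
  moreover have "(\<lambda>i. cnj (x i) * x i) = (\<lambda>i. complex_of_real ((cmod (x i))\<^sup>2))"
    by (rule ext) (simp add: complex_norm_square mult.commute del: of_real_power)
  ultimately show ?thesis unfolding cinner_def by simp
qed

lemma cinner_cnj: "cnj (cinner x y) = cinner y x"
  unfolding cinner_def by (simp flip: infsum_cnj add: mult.commute)

lemma cinner_add_right: "x \<in> l2 \<Longrightarrow> y \<in> l2 \<Longrightarrow> z \<in> l2 \<Longrightarrow>
   cinner x (\<lambda>i. y i + z i) = cinner x y + cinner x z"
  unfolding cinner_def by (simp add: distrib_left infsum_add inner_summable)

lemma cinner_scale_right: "x \<in> l2 \<Longrightarrow> y \<in> l2 \<Longrightarrow> cinner x (\<lambda>i. c * y i) = c * cinner x y"
  unfolding cinner_def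
  by (simp add: mult.left_commute infsum_cmult_right inner_summable)

lemma cinner_add_left: "x \<in> l2 \<Longrightarrow> y \<in> l2 \<Longrightarrow> z \<in> l2 \<Longrightarrow>
   cinner (\<lambda>i. x i + y i) z = cinner x z + cinner y z"
  unfolding cinner_def by (simp add: distrib_right infsum_add inner_summable)

lemma cinner_scale_left: "x \<in> l2 \<Longrightarrow> y \<in> l2 \<Longrightarrow> cinner (\<lambda>i. c * x i) y = cnj c * cinner x y"
  unfolding cinner_def
  by (simp add: mult.assoc infsum_cmult_right inner_summable)

lemma cinner_neg_right: "x \<in> l2 \<Longrightarrow> y \<in> l2 \<Longrightarrow> cinner x (\<lambda>i. - y i) = - cinner x y"
  using cinner_scale_right[of x y "-1"] by simp

lemma cinner_diff_right: "x \<in> l2 \<Longrightarrow> y \<in> l2 \<Longrightarrow> z \<in> l2 \<Longrightarrow>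
   cinner x (\<lambda>i. y i - z i) = cinner x y - cinner x z"
  using cinner_add_right[of x y "\<lambda>i. - z i"] cinner_neg_right[of x z] l2_neg[of z] by simp

lemma cinner_zero_right[simp]: "cinner x (\<lambda>i. 0) = 0"
  unfolding cinner_def by simp

lemma cinner_zero_left[simp]: "cinner (\<lambda>i. 0) x = 0"
  unfolding cinner_def by simp

lemma infsum_single: "infsum (\<lambda>i. if i = j then c else 0) UNIV = (c::complex)"
proof -
  have "infsum (\<lambda>i. if i = j then c else 0) UNIV = infsum (\<lambda>i. c) {j}"
    by (rule infsum_cong_neutral) auto
  thus ?thesis by simp
qed

lemma cinner_delta: "cinner (delta j) a = a j"
proof -
  have "(\<lambda>i. cnj (delta j i) * a i) = (\<lambda>i. if i = j then a j else 0)"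
    by (auto simp: delta_def)
  thus ?thesis unfolding cinner_def by (simp add: infsum_single)
qed

lemma vec_ext: "a \<in> l2 \<Longrightarrow> b \<in> l2 \<Longrightarrow> (\<And>x. x \<in> l2 \<Longrightarrow> cinner x a = cinner x b) \<Longrightarrow> a = b"
proof
  fix i assume "\<And>x. x \<in> l2 \<Longrightarrow> cinner x a = cinner x b"
  from this[OF l2_delta[of i]] show "a i = b i" by (simp add: cinner_delta)
qed

lemma vnorm_expand: "x \<in> l2 \<Longrightarrow> y \<in> l2 \<Longrightarrow>
  (vnorm (\<lambda>i. x i + y i))\<^sup>2 = (vnorm x)\<^sup>2 + (vnorm y)\<^sup>2 + 2 * Re (cinner x y)"
proof -
  assume x: "x \<in> l2" and y: "y \<in> l2"
  have pw: "\<And>a b. (cmod (a + b))\<^sup>2 = (cmod a)\<^sup>2 + (cmod b)\<^sup>2 + 2 * Re (cnj a * b)"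
    unfolding cmod_power2 by (simp add: power2_eq_square algebra_simps)
  have sre: "(\<lambda>i. Re (cnj (x i) * y i)) summable_on UNIV"
    using summable_on_Re[OF inner_summable[OF x y]] by simp
  have "infsum (\<lambda>i. (cmod (x i + y i))\<^sup>2) UNIV
     = infsum (\<lambda>i. ((cmod (x i))\<^sup>2 + (cmod (y i))\<^sup>2) + 2 * Re (cnj (x i) * y i)) UNIV"
    by (simp add: pw add.assoc)
  also have "\<dots> = infsum (\<lambda>i. ((cmod (x i))\<^sup>2 + (cmod (y i))\<^sup>2)) UNIV
       + infsum (\<lambda>i. 2 * Re (cnj (x i) * y i)) UNIV"
    by (rule infsum_add[OF summable_on_add[OF l2_summ[OF x] l2_summ[OF y]] summable_on_cmult_right[OF sre]])
  also have "infsum (\<lambda>i. ((cmod (x i))\<^sup>2 + (cmod (y i))\<^sup>2)) UNIV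
      = infsum (\<lambda>i. (cmod (x i))\<^sup>2) UNIV + infsum (\<lambda>i. (cmod (y i))\<^sup>2) UNIV"
    by (rule infsum_add[OF l2_summ[OF x] l2_summ[OF y]])
  also have "infsum (\<lambda>i. 2 * Re (cnj (x i) * y i)) UNIV = 2 * infsum (\<lambda>i. Re (cnj (x i) * y i)) UNIV"
    by (rule infsum_cmult_right) (use sre in simp)
  also have "infsum (\<lambda>i. Re (cnj (x i) * y i)) UNIV = Re (cinner x y)"
    unfolding cinner_def by (rule infsum_Re[OF inner_summable[OF x y]])
  finally show ?thesis by (simp add: vnorm_sq)
qed

lemma vnorm_sq_cinner: "x \<in> l2 \<Longrightarrow> (vnorm x)\<^sup>2 = Re (cinner x x)"
  by (simp add: cinner_self)



lemma cinner_neg_left: "x \<in> l2 \<Longrightarrow> y \<in> l2 \<Longrightarrow> cinner (\<lambda>i. - x i) y = - cinner x y"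
  using cinner_scale_left[of x y "-1"] by simp

lemma cinner_diff_left: "x \<in> l2 \<Longrightarrow> y \<in> l2 \<Longrightarrow> z \<in> l2 \<Longrightarrow>
   cinner (\<lambda>i. x i - y i) z = cinner x z - cinner y z"
  using cinner_add_left[of x "\<lambda>i. - y i" z] cinner_neg_left[of y z] l2_neg[of y] by simp

lemma cinner_sum_left: "finite J \<Longrightarrow> (\<And>j. j \<in> J \<Longrightarrow> v j \<in> l2) \<Longrightarrow> y \<in> l2 \<Longrightarrow>
   cinner (\<lambda>k. \<Sum>j\<in>J. v j k) y = (\<Sum>j\<in>J. cinner (v j) y)"
proof (induction J rule: finite_induct)
  case empty then show ?case by simp
next
  case (insert a J)
  have "cinner (\<lambda>k. \<Sum>j\<in>insert a J. v j k) y = cinner (\<lambda>k. v a k + (\<Sum>j\<in>J. v j k)) y"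
    using insert by simp
  also have "\<dots> = cinner (v a) y + cinner (\<lambda>k. \<Sum>j\<in>J. v j k) y"
    by (rule cinner_add_left) (use insert l2_sum in auto)
  finally show ?case using insert by simp
qed

lemma cinner_sum_right: "finite J \<Longrightarrow> (\<And>j. j \<in> J \<Longrightarrow> v j \<in> l2) \<Longrightarrow> y \<in> l2 \<Longrightarrow>
   cinner y (\<lambda>k. \<Sum>j\<in>J. v j k) = (\<Sum>j\<in>J. cinner y (v j))"
proof -
  assume a: "finite J" "\<And>j. j \<in> J \<Longrightarrow> v j \<in> l2" "y \<in> l2"
  have "cinner y (\<lambda>k. \<Sum>j\<in>J. v j k) = cnj (cinner (\<lambda>k. \<Sum>j\<in>J. v j k) y)"
    by (simp add: cinner_cnj)
  also have "\<dots> = (\<Sum>j\<in>J. cnj (cinner (v j) y))" using cinner_sum_left[OF a] by simp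
  finally show ?thesis by (simp add: cinner_cnj)
qed

section \<open>Bounded operators\<close>

lemma bop_l2: "bounded_op T \<Longrightarrow> T x \<in> l2"
  unfolding bounded_op_def by (cases "x \<in> l2") auto

lemma bop_off: "bounded_op T \<Longrightarrow> x \<notin> l2 \<Longrightarrow> T x = (\<lambda>i. 0)"
  unfolding bounded_op_def by auto

lemma bop_lin: "bounded_op T \<Longrightarrow> x \<in> l2 \<Longrightarrow> y \<in> l2 \<Longrightarrow> T (\<lambda>i. c * x i + y i) = (\<lambda>i. c * T x i + T y i)"
  unfolding bounded_op_def by auto

lemma bop_zero: "bounded_op T \<Longrightarrow> T (\<lambda>i. 0) = (\<lambda>i. 0)"
proof -
  assume b: "bounded_op T"
  have "T (\<lambda>i. 1 * 0 + 0) = (\<lambda>i. 1 * T (\<lambda>i. 0) i + T (\<lambda>i. 0) i)"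
    by (rule bop_lin[OF b]) auto
  hence "T (\<lambda>i. 0) = (\<lambda>i. T (\<lambda>i. 0) i + T (\<lambda>i. 0) i)" by simp
  thus ?thesis by (metis add_cancel_right_right)
qed

lemma bop_add: "bounded_op T \<Longrightarrow> x \<in> l2 \<Longrightarrow> y \<in> l2 \<Longrightarrow> T (\<lambda>i. x i + y i) = (\<lambda>i. T x i + T y i)"
  using bop_lin[of T x y 1] by simp

lemma bop_scale: "bounded_op T \<Longrightarrow> x \<in> l2 \<Longrightarrow> T (\<lambda>i. c * x i) = (\<lambda>i. c * T x i)"
  using bop_lin[of T x "\<lambda>i. 0" c] bop_zero[of T] by simp

lemma bop_neg: "bounded_op T \<Longrightarrow> x \<in> l2 \<Longrightarrow> T (\<lambda>i. - x i) = (\<lambda>i. - T x i)"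
  using bop_scale[of T x "-1"] by simp

lemma bop_diff: "bounded_op T \<Longrightarrow> x \<in> l2 \<Longrightarrow> y \<in> l2 \<Longrightarrow> T (\<lambda>i. x i - y i) = (\<lambda>i. T x i - T y i)"
  using bop_add[of T x "\<lambda>i. - y i"] bop_neg[of T y] l2_neg[of y] by simp

lemma bop_sum: assumes bT: "bounded_op T" shows "finite J \<Longrightarrow> (\<And>j. j \<in> J \<Longrightarrow> v j \<in> l2) \<Longrightarrow>
   T (\<lambda>k. \<Sum>j\<in>J. v j k) = (\<lambda>k. \<Sum>j\<in>J. T (v j) k)"
proof (induction J rule: finite_induct)
  case empty then show ?case by (simp add: bop_zero[OF bT])
next
  case (insert a J)
  have "T (\<lambda>k. \<Sum>j\<in>insert a J. v j k) = T (\<lambda>k. v a k + (\<Sum>j\<in>J. v j k))"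
    using insert by simp
  also have "\<dots> = (\<lambda>k. T (v a) k + T (\<lambda>k. \<Sum>j\<in>J. v j k) k)"
    by (rule bop_add[OF bT]) (use insert l2_sum in auto)
  finally show ?case using insert by simp
qed

lemma bop_bound: fixes T :: "'i op" shows "bounded_op T \<Longrightarrow> \<exists>K\<ge>0. \<forall>x\<in>l2. vnorm (T x) \<le> K * vnorm x"
proof -
  assume "bounded_op T"
  then obtain K where K: "\<forall>x\<in>(l2::'i vec set). vnorm (T x) \<le> K * vnorm x" unfolding bounded_op_def by auto
  have "\<forall>x\<in>(l2::'i vec set). vnorm (T x) \<le> max K 0 * vnorm x"
  proof
    fix x :: "'i vec" assume "x \<in> l2"
    hence "vnorm (T x) \<le> K * vnorm x" using K by auto
    also have "\<dots> \<le> max K 0 * vnorm x" by (rule mult_right_mono) auto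
    finally show "vnorm (T x) \<le> max K 0 * vnorm x" .
  qed
  thus ?thesis by (intro exI[of _ "max K 0"]) auto
qed

definition is_adj :: "'i op \<Rightarrow> 'i op \<Rightarrow> bool" where
  "is_adj T S \<longleftrightarrow> bounded_op S \<and> (\<forall>x\<in>l2. \<forall>y\<in>l2. cinner (T x) y = cinner x (S y))"

lemma adj_unique: "is_adj T S1 \<Longrightarrow> is_adj T S2 \<Longrightarrow> S1 = S2"
proof
  fix y assume a1: "is_adj T S1" and a2: "is_adj T S2"
  show "S1 y = S2 y"
  proof (cases "y \<in> l2")
    case True
    show ?thesis
      apply (rule vec_ext)
      using a1 a2 True unfolding is_adj_def by (auto simp: bop_l2)
  next
    case False
    then show ?thesis using a1 a2 unfolding is_adj_def by (simp add: bop_off)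
  qed
qed

lemma restr_l2: "finite J \<Longrightarrow> (\<lambda>i. if i \<in> J then g i else 0) \<in> l2"
  unfolding l2_def mem_Collect_eq
  by (rule finite_nonzero_values_imp_summable_on) (rule finite_subset[of _ J], auto)

lemma restr_sum: "finite J \<Longrightarrow> (\<lambda>i. if i \<in> J then g i else 0) = (\<lambda>k. \<Sum>j\<in>J. g j * delta j k)"
proof
  fix k assume J: "finite J"
  have "(\<Sum>j\<in>J. g j * delta j k) = (\<Sum>j\<in>J. if k = j then g j else 0)"
    by (rule sum.cong) (auto simp: delta_def)
  also have "\<dots> = (if k \<in> J then g k else 0)" using J by simp
  finally show "(if k \<in> J then g k else 0) = (\<Sum>j\<in>J. g j * delta j k)" by simp
qed

lemma vnorm_restr: "finite J \<Longrightarrow> (vnorm (\<lambda>i. if i \<in> J then g i else 0))\<^sup>2 = (\<Sum>i\<in>J. (cmod (g i))\<^sup>2)"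
proof -
  assume J: "finite J"
  have "infsum (\<lambda>i. (cmod (if i \<in> J then g i else 0))\<^sup>2) UNIV = infsum (\<lambda>i. (cmod (g i))\<^sup>2) J"
    by (rule infsum_cong_neutral) auto
  thus ?thesis using J by (simp add: vnorm_sq)
qed

lemma tail_small:
  assumes x: "x \<in> l2" and e: "\<epsilon> > 0"
  shows "\<exists>J. finite J \<and> (vnorm (\<lambda>i. x i - (if i \<in> J then x i else 0)))\<^sup>2 \<le> \<epsilon>"
proof -
  define f where "f = (\<lambda>i. (cmod (x i))\<^sup>2)"
  have sf: "f summable_on UNIV" using x by (simp add: l2_iff f_def)
  obtain J where J: "finite J" and d: "dist (sum f J) (infsum f UNIV) \<le> \<epsilon>"
    using infsum_finite_approximation[OF sf e] by blast
  have s1: "(\<lambda>i. if i \<in> J then f i else 0) summable_on UNIV"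
    by (rule summable_on_comparison_test[OF sf]) (auto simp: f_def)
  have s2: "(\<lambda>i. if i \<in> J then 0 else f i) summable_on UNIV"
    by (rule summable_on_comparison_test[OF sf]) (auto simp: f_def)
  have "infsum f UNIV = infsum (\<lambda>i. (if i \<in> J then f i else 0) + (if i \<in> J then 0 else f i)) UNIV"
    by (rule infsum_cong) auto
  also have "\<dots> = infsum (\<lambda>i. if i \<in> J then f i else 0) UNIV + infsum (\<lambda>i. if i \<in> J then 0 else f i) UNIV"
    by (rule infsum_add[OF s1 s2])
  also have "infsum (\<lambda>i. if i \<in> J then f i else 0) UNIV = infsum f J"
    by (rule infsum_cong_neutral) auto
  also have "infsum f J = sum f J" using J by simp
  finally have eq: "infsum (\<lambda>i. if i \<in> J then 0 else f i) UNIV = infsum f UNIV - sum f J" by simp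
  have "(vnorm (\<lambda>i. x i - (if i \<in> J then x i else 0)))\<^sup>2 = infsum (\<lambda>i. if i \<in> J then 0 else f i) UNIV"
    unfolding vnorm_sq f_def by (rule infsum_cong) auto
  also have "\<dots> \<le> \<epsilon>" using eq d by (simp add: dist_real_def)
  finally show ?thesis using J by blast
qed

lemma adj_exists:
  fixes T :: "'i op"
  assumes bT: "bounded_op T"
  shows "\<exists>S. is_adj T S"
proof -
  obtain K where K0: "K \<ge> 0" and K: "\<forall>x\<in>l2. vnorm (T x) \<le> K * vnorm x" using bop_bound[OF bT] by blast
  define S where "S = (\<lambda>y. if y \<in> l2 then (\<lambda>i. cinner (T (delta i)) y) else (\<lambda>i. 0))"
  have gl2: "(\<lambda>i. cinner (T (delta i)) y) \<in> l2 \<and> vnorm (\<lambda>i. cinner (T (delta i)) y) \<le> K * vnorm y"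
    if y: "y \<in> l2" for y
  proof -
    define g where "g = (\<lambda>i. cinner (T (delta i)) y)"
    have fin: "(\<Sum>i\<in>J. (cmod (g i))\<^sup>2) \<le> (K * vnorm y)\<^sup>2" if J: "finite J" for J
    proof -
      define xJ where "xJ = (\<lambda>i. if i \<in> J then g i else 0)"
      define s where "s = (\<Sum>i\<in>J. (cmod (g i))\<^sup>2)"
      have s0: "s \<ge> 0" by (simp add: s_def sum_nonneg)
      have xl2: "xJ \<in> l2" using restr_l2[OF J] xJ_def by simp
      have "(vnorm xJ)\<^sup>2 = s" using vnorm_restr[OF J, of g] by (simp add: xJ_def s_def)
      hence vx: "vnorm xJ = sqrt s" by (metis real_sqrt_abs vnorm_nonneg abs_of_nonneg)
      have "xJ = (\<lambda>k. \<Sum>j\<in>J. g j * delta j k)" using restr_sum[OF J] xJ_def by simp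
      hence "T xJ = (\<lambda>k. \<Sum>j\<in>J. T (\<lambda>k. g j * delta j k) k)"
        using bop_sum[OF bT J, of "\<lambda>j k. g j * delta j k", OF l2_scale[OF l2_delta]] by simp
      also have "\<dots> = (\<lambda>k. \<Sum>j\<in>J. g j * T (delta j) k)"
        using bop_scale[OF bT l2_delta] by simp
      finally have TxJ: "T xJ = (\<lambda>k. \<Sum>j\<in>J. g j * T (delta j) k)" .
      have "cinner (T xJ) y = (\<Sum>j\<in>J. cinner (\<lambda>k. g j * T (delta j) k) y)"
        unfolding TxJ by (rule cinner_sum_left[OF J _ y]) (simp add: l2_scale bop_l2[OF bT])
      also have "\<dots> = (\<Sum>j\<in>J. cnj (g j) * g j)"
        by (rule sum.cong) (simp_all add: cinner_scale_left bop_l2[OF bT] y g_def)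
      also have "\<dots> = (\<Sum>j\<in>J. complex_of_real ((cmod (g j))\<^sup>2))"
        by (rule sum.cong) (simp_all add: complex_norm_square mult.commute del: of_real_power)
      also have "\<dots> = complex_of_real s" by (simp add: s_def del: of_real_power)
      finally have ci: "cinner (T xJ) y = complex_of_real s" .
      have "s \<le> vnorm (T xJ) * vnorm y" using cinner_cs[OF bop_l2[OF bT] y, of xJ] ci s0 by simp
      also have "\<dots> \<le> (K * vnorm xJ) * vnorm y" using K xl2 by (simp add: mult_right_mono)
      finally have ss: "s \<le> K * sqrt s * vnorm y" using vx by simp
      have "sqrt s \<le> K * vnorm y"
      proof (cases "s = 0")
        case True then show ?thesis using K0 by simp
      next
        case False
        hence sp: "sqrt s > 0" using s0 by simp
        have "sqrt s * sqrt s \<le> sqrt s * (K * vnorm y)" using ss s0 by (simp add: algebra_simps)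
        thus ?thesis using sp by (meson mult_le_cancel_left_pos)
      qed
      hence "(sqrt s)\<^sup>2 \<le> (K * vnorm y)\<^sup>2" by (rule power_mono) (simp add: s0)
      thus ?thesis using s0 by (simp add: s_def)
    qed
    have summ: "(\<lambda>i. (cmod (g i))\<^sup>2) summable_on UNIV"
      by (rule nonneg_bdd_above_summable_on) (auto intro!: bdd_aboveI[where M="(K * vnorm y)\<^sup>2"] fin)
    have "infsum (\<lambda>i. (cmod (g i))\<^sup>2) UNIV \<le> (K * vnorm y)\<^sup>2"
      by (rule infsum_le_finite_sums[OF summ]) (auto intro: fin)
    hence "sqrt (infsum (\<lambda>i. (cmod (g i))\<^sup>2) UNIV) \<le> sqrt ((K * vnorm y)\<^sup>2)"
      by (rule real_sqrt_le_mono)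
    hence "sqrt (infsum (\<lambda>i. (cmod (g i))\<^sup>2) UNIV) \<le> K * vnorm y"
      using K0 by simp
    hence "vnorm g \<le> K * vnorm y" by (simp add: vnorm_def)
    with summ show ?thesis by (simp add: l2_iff g_def)
  qed
  have adj: "cinner (T x) y = cinner x (\<lambda>i. cinner (T (delta i)) y)" if x: "x \<in> l2" and y: "y \<in> l2" for x y
  proof -
    define g where "g = (\<lambda>i. cinner (T (delta i)) y)"
    have gl: "g \<in> l2" and gK: "vnorm g \<le> K * vnorm y" using gl2[OF y] g_def by auto
    define \<phi> where "\<phi> = (\<lambda>z. cinner (T z) y - cinner z g)"
    define C where "C = K * vnorm y + vnorm g"
    have C0: "C \<ge> 0" using K0 by (simp add: C_def)
    have phiJ: "\<phi> (\<lambda>i. if i \<in> J then x i else 0) = 0" if J: "finite J" for J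
    proof -
      have eq: "(\<lambda>i. if i \<in> J then x i else 0) = (\<lambda>k. \<Sum>j\<in>J. x j * delta j k)" by (rule restr_sum[OF J])
      have "T (\<lambda>k. \<Sum>j\<in>J. x j * delta j k) = (\<lambda>k. \<Sum>j\<in>J. T (\<lambda>k. x j * delta j k) k)"
        using bop_sum[OF bT J, of "\<lambda>j k. x j * delta j k", OF l2_scale[OF l2_delta]] by simp
      also have "\<dots> = (\<lambda>k. \<Sum>j\<in>J. x j * T (delta j) k)"
        using bop_scale[OF bT l2_delta] by simp
      finally have T1: "T (\<lambda>k. \<Sum>j\<in>J. x j * delta j k) = (\<lambda>k. \<Sum>j\<in>J. x j * T (delta j) k)" .
      have c1: "cinner (\<lambda>k. \<Sum>j\<in>J. x j * T (delta j) k) y = (\<Sum>j\<in>J. cnj (x j) * g j)"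
        apply (subst cinner_sum_left[OF J _ y])
         apply (simp add: l2_scale bop_l2[OF bT])
        by (rule sum.cong) (simp_all add: cinner_scale_left bop_l2[OF bT] y g_def)
      have c2: "cinner (\<lambda>k. \<Sum>j\<in>J. x j * delta j k) g = (\<Sum>j\<in>J. cnj (x j) * g j)"
        apply (subst cinner_sum_left[OF J _ gl])
         apply (simp add: l2_scale l2_delta)
        by (rule sum.cong) (simp_all add: cinner_scale_left l2_delta gl cinner_delta)
      show ?thesis unfolding \<phi>_def eq T1 c1 c2 by simp
    qed
    have bnd: "cmod (\<phi> x) \<le> C * \<epsilon>" if ep: "\<epsilon> > 0" for \<epsilon>
    proof -
      obtain J where J: "finite J" and tl: "(vnorm (\<lambda>i. x i - (if i \<in> J then x i else 0)))\<^sup>2 \<le> \<epsilon>\<^sup>2"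
        using tail_small[OF x, of "\<epsilon>\<^sup>2"] ep by auto
      define xJ where "xJ = (\<lambda>i. if i \<in> J then x i else 0)"
      define d where "d = (\<lambda>i. x i - xJ i)"
      have xJl: "xJ \<in> l2" unfolding xJ_def by (rule restr_l2[OF J])
      have dl: "d \<in> l2" unfolding d_def by (rule l2_diff[OF x xJl])
      have "(vnorm d)\<^sup>2 \<le> \<epsilon>\<^sup>2" using tl unfolding d_def xJ_def .
      hence vd: "vnorm d \<le> \<epsilon>" by (rule power2_le_imp_le) (use ep in simp)
      have "\<phi> x = \<phi> x - \<phi> xJ" using phiJ[OF J] by (simp add: xJ_def)
      also have "\<dots> = cinner (T d) y - cinner d g"
      proof -
        have "T d = (\<lambda>i. T x i - T xJ i)" unfolding d_def by (rule bop_diff[OF bT x xJl])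
        hence "cinner (T d) y = cinner (T x) y - cinner (T xJ) y"
          using cinner_diff_left[OF bop_l2[OF bT] bop_l2[OF bT] y] by simp
        moreover have "cinner d g = cinner x g - cinner xJ g"
          unfolding d_def by (rule cinner_diff_left[OF x xJl gl])
        ultimately show ?thesis by (simp add: \<phi>_def)
      qed
      finally have "cmod (\<phi> x) \<le> cmod (cinner (T d) y) + cmod (cinner d g)"
        by (simp add: norm_triangle_ineq4)
      also have "\<dots> \<le> vnorm (T d) * vnorm y + vnorm d * vnorm g"
        by (intro add_mono cinner_cs bop_l2[OF bT] y dl gl)
      also have "\<dots> \<le> (K * vnorm d) * vnorm y + vnorm d * vnorm g"
        using K dl by (simp add: mult_right_mono)
      also have "\<dots> = C * vnorm d" by (simp add: C_def algebra_simps)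
      also have "\<dots> \<le> C * \<epsilon>" using vd C0 by (simp add: mult_left_mono)
      finally show ?thesis .
    qed
    have "\<phi> x = 0"
    proof (rule ccontr)
      assume nz: "\<phi> x \<noteq> 0"
      define m where "m = cmod (\<phi> x)"
      have mp: "m > 0" using nz by (simp add: m_def)
      have "m \<le> C * (m / (C + 1))" using bnd[of "m / (C + 1)"] mp C0 by (simp add: m_def)
      also have "\<dots> < m" using mp C0 by (simp add: field_simps)
      finally show False by simp
    qed
    thus ?thesis by (simp add: \<phi>_def g_def)
  qed
  have bS: "bounded_op S"
    unfolding bounded_op_def
  proof (intro conjI ballI allI impI)
    fix x :: "'i vec" assume "x \<in> l2" thus "S x \<in> l2" using gl2 by (simp add: S_def)
  next
    fix x :: "'i vec" assume "x \<notin> l2" thus "S x = (\<lambda>_. 0)" by (simp add: S_def)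
  next
    fix x y :: "'i vec" and c assume x: "x \<in> l2" and y: "y \<in> l2"
    have l: "(\<lambda>i. c * x i + y i) \<in> l2" by (rule l2_lin[OF x y])
    show "S (\<lambda>i. c * x i + y i) = (\<lambda>i. c * S x i + S y i)"
      using x y l by (simp add: S_def cinner_add_right cinner_scale_right l2_scale bop_l2[OF bT])
  next
    show "\<exists>K. \<forall>x\<in>l2. vnorm (S x) \<le> K * vnorm x"
      using gl2 by (intro exI[of _ K]) (simp add: S_def)
  qed
  have "\<forall>x\<in>l2. \<forall>y\<in>l2. cinner (T x) y = cinner x (S y)"
    using adj by (simp add: S_def)
  with bS show ?thesis unfolding is_adj_def by blast
qed

lemma adjoint_is_adj: "bounded_op T \<Longrightarrow> is_adj T (adjoint T)"
proof -
  assume bT: "bounded_op T"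
  obtain S where S: "is_adj T S" using adj_exists[OF bT] by blast
  have "\<exists>!S. bounded_op S \<and> (\<forall>x\<in>l2. \<forall>y\<in>l2. cinner (T x) y = cinner x (S y))"
    using S adj_unique unfolding is_adj_def by blast
  hence "bounded_op (adjoint T) \<and> (\<forall>x\<in>l2. \<forall>y\<in>l2. cinner (T x) y = cinner x (adjoint T y))"
    unfolding adjoint_def by (rule theI')
  thus ?thesis unfolding is_adj_def by blast
qed



lemma adjL: "is_adj T S \<Longrightarrow> x \<in> l2 \<Longrightarrow> y \<in> l2 \<Longrightarrow> cinner (T x) y = cinner x (S y)"
  unfolding is_adj_def by auto

lemma adjR: "is_adj T S \<Longrightarrow> x \<in> l2 \<Longrightarrow> y \<in> l2 \<Longrightarrow> cinner (S y) x = cinner y (T x)"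
proof -
  assume a: "is_adj T S" "x \<in> l2" "y \<in> l2"
  have "cinner (S y) x = cnj (cinner x (S y))" by (simp add: cinner_cnj)
  also have "\<dots> = cnj (cinner (T x) y)" using adjL[OF a] by simp
  also have "\<dots> = cinner y (T x)" by (simp add: cinner_cnj)
  finally show ?thesis .
qed

lemma adj_bop: "is_adj T S \<Longrightarrow> bounded_op S"
  unfolding is_adj_def by auto

lemma adj_sym: assumes "bounded_op T" "is_adj T S" shows "is_adj S T"
proof -
  have "\<forall>x\<in>l2. \<forall>y\<in>l2. cinner (S x) y = cinner x (T y)" using adjR[OF assms(2)] by blast
  thus ?thesis using assms unfolding is_adj_def by blast
qed

lemma bop_comp: "bounded_op A \<Longrightarrow> bounded_op B \<Longrightarrow> bounded_op (\<lambda>x. A (B x))"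
proof -
  assume bA: "bounded_op A" and bB: "bounded_op B"
  obtain K1 where K10: "K1 \<ge> 0" and K1: "\<forall>x\<in>l2. vnorm (A x) \<le> K1 * vnorm x" using bop_bound[OF bA] by blast
  obtain K2 where K20: "K2 \<ge> 0" and K2: "\<forall>x\<in>l2. vnorm (B x) \<le> K2 * vnorm x" using bop_bound[OF bB] by blast
  show ?thesis unfolding bounded_op_def
  proof (intro conjI ballI allI impI)
    fix x :: "'a vec" assume "x \<in> l2" thus "A (B x) \<in> l2" by (simp add: bop_l2[OF bA])
  next
    fix x :: "'a vec" assume "x \<notin> l2" thus "A (B x) = (\<lambda>_. 0)" by (simp add: bop_off[OF bB] bop_zero[OF bA])
  next
    fix x y :: "'a vec" and c assume x: "x \<in> l2" and y: "y \<in> l2"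
    show "A (B (\<lambda>i. c * x i + y i)) = (\<lambda>i. c * A (B x) i + A (B y) i)"
      by (simp add: bop_lin[OF bB x y] bop_lin[OF bA bop_l2[OF bB] bop_l2[OF bB]])
  next
    show "\<exists>K. \<forall>x\<in>l2. vnorm (A (B x)) \<le> K * vnorm x"
    proof (intro exI ballI)
      fix x :: "'a vec" assume x: "x \<in> l2"
      have "vnorm (A (B x)) \<le> K1 * vnorm (B x)" using K1 bop_l2[OF bB] by blast
      also have "\<dots> \<le> K1 * (K2 * vnorm x)" using K2 x K10 by (simp add: mult_left_mono)
      finally show "vnorm (A (B x)) \<le> (K1 * K2) * vnorm x" by (simp add: mult.assoc)
    qed
  qed
qed

text \<open>Partial isometries\<close>

lemma pi_norm:
  fixes T S :: "'i op"
  assumes bT: "bounded_op T" and adj: "is_adj T S" and tst: "\<And>x. x \<in> l2 \<Longrightarrow> T (S (T x)) = T x"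
    and x: "x \<in> l2"
  shows "vnorm (S (T x)) = vnorm (T x)" and "vnorm (T x) \<le> vnorm x"
proof -
  have bS: "bounded_op S" using adj by (rule adj_bop)
  have l1: "T x \<in> l2" and l2': "S (T x) \<in> l2" using bop_l2 bT bS by auto
  have "complex_of_real ((vnorm (S (T x)))\<^sup>2) = cinner (S (T x)) (S (T x))" by (simp add: cinner_self l2')
  also have "\<dots> = cinner (T (S (T x))) (T x)" using adjL[OF adj l2' l1] by simp
  also have "\<dots> = cinner (T x) (T x)" using tst[OF x] by simp
  also have "\<dots> = complex_of_real ((vnorm (T x))\<^sup>2)" by (simp add: cinner_self l1)
  finally have "(vnorm (S (T x)))\<^sup>2 = (vnorm (T x))\<^sup>2" using of_real_eq_iff by blast
  thus eq: "vnorm (S (T x)) = vnorm (T x)" by (simp add: power2_eq_iff_nonneg)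
  have "complex_of_real ((vnorm (T x))\<^sup>2) = cinner (T x) (T x)" by (simp add: cinner_self l1)
  also have "\<dots> = cinner x (S (T x))" using adjL[OF adj x l1] by simp
  finally have "(vnorm (T x))\<^sup>2 = cmod (cinner x (S (T x)))"
    by (metis norm_of_real abs_of_nonneg zero_le_power2)
  also have "\<dots> \<le> vnorm x * vnorm (S (T x))" by (rule cinner_cs[OF x l2'])
  finally have "vnorm (T x) * vnorm (T x) \<le> vnorm x * vnorm (T x)" using eq by (simp add: power2_eq_square)
  thus "vnorm (T x) \<le> vnorm x"
    by (metis mult_right_le_imp_le vnorm_nonneg order_le_less mult_zero_right order.refl)
qed

lemma pi_dual:
  fixes T S :: "'i op"
  assumes bT: "bounded_op T" and adj: "is_adj T S" and tst: "\<And>x. x \<in> l2 \<Longrightarrow> T (S (T x)) = T x"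
    and y: "y \<in> l2"
  shows "S (T (S y)) = S y"
proof -
  have bS: "bounded_op S" using adj by (rule adj_bop)
  show ?thesis
  proof (rule vec_ext)
    show "S (T (S y)) \<in> l2" "S y \<in> l2" using bop_l2 bS by auto
    fix x :: "'i vec" assume x: "x \<in> l2"
    have "cinner x (S (T (S y))) = cinner (T x) (T (S y))"
      using adjL[OF adj x bop_l2[OF bT]] by simp
    also have "\<dots> = cinner (S (T x)) (S y)"
      using adjR[OF adj bop_l2[OF bS] bop_l2[OF bT]] by simp
    also have "\<dots> = cinner (T (S (T x))) y"
      using adjL[OF adj bop_l2[OF bS] y] by simp
    also have "\<dots> = cinner x (S y)" using tst[OF x] adjL[OF adj x y] by simp
    finally show "cinner x (S (T (S y))) = cinner x (S y)" .
  qed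
qed

lemma proj_pyth:
  fixes R :: "'i op"
  assumes bR: "bounded_op R" and idem: "\<And>x. x \<in> l2 \<Longrightarrow> R (R x) = R x"
    and sa: "\<And>x y. x \<in> l2 \<Longrightarrow> y \<in> l2 \<Longrightarrow> cinner (R x) y = cinner x (R y)"
    and x: "x \<in> l2"
  shows "(vnorm x)\<^sup>2 = (vnorm (R x))\<^sup>2 + (vnorm (\<lambda>i. x i - R x i))\<^sup>2"
proof -
  have rl: "R x \<in> l2" by (rule bop_l2[OF bR])
  have dl: "(\<lambda>i. x i - R x i) \<in> l2" by (rule l2_diff[OF x rl])
  have "cinner (R x) (\<lambda>i. x i - R x i) = cinner (R x) x - cinner (R x) (R x)"
    by (rule cinner_diff_right[OF rl x rl])
  also have "cinner (R x) (R x) = cinner x (R (R x))" by (rule sa[OF x rl])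
  also have "\<dots> = cinner x (R x)" using idem[OF x] by simp
  also have "cinner (R x) x = cinner x (R x)" by (rule sa[OF x x])
  finally have z: "cinner (R x) (\<lambda>i. x i - R x i) = 0" by simp
  have "(vnorm (\<lambda>i. R x i + (x i - R x i)))\<^sup>2 = (vnorm (R x))\<^sup>2 + (vnorm (\<lambda>i. x i - R x i))\<^sup>2 + 2 * Re (cinner (R x) (\<lambda>i. x i - R x i))"
    by (rule vnorm_expand[OF rl dl])
  thus ?thesis using z by simp
qed

lemma pi_projs:
  fixes T S :: "'i op"
  assumes bT: "bounded_op T" and adj: "is_adj T S" and tst: "\<And>x. x \<in> l2 \<Longrightarrow> T (S (T x)) = T x"
  shows "bounded_op (\<lambda>x. S (T x))" "\<And>x. x \<in> l2 \<Longrightarrow> S (T (S (T x))) = S (T x)"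
    "\<And>x y. x \<in> l2 \<Longrightarrow> y \<in> l2 \<Longrightarrow> cinner (S (T x)) y = cinner x (S (T y))"
    "bounded_op (\<lambda>x. T (S x))" "\<And>x. x \<in> l2 \<Longrightarrow> T (S (T (S x))) = T (S x)"
    "\<And>x y. x \<in> l2 \<Longrightarrow> y \<in> l2 \<Longrightarrow> cinner (T (S x)) y = cinner x (T (S y))"
proof -
  have bS: "bounded_op S" using adj by (rule adj_bop)
  show "bounded_op (\<lambda>x. S (T x))" by (rule bop_comp[OF bS bT])
  show "bounded_op (\<lambda>x. T (S x))" by (rule bop_comp[OF bT bS])
  show "\<And>x. x \<in> l2 \<Longrightarrow> S (T (S (T x))) = S (T x)" using tst by simp
  show "\<And>x. x \<in> l2 \<Longrightarrow> T (S (T (S x))) = T (S x)" using tst bop_l2[OF bS] by simp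
  fix x y :: "'i vec" assume x: "x \<in> l2" and y: "y \<in> l2"
  show "cinner (S (T x)) y = cinner x (S (T y))"
    using adjR[OF adj y bop_l2[OF bT]] adjL[OF adj x bop_l2[OF bT]] by simp
  show "cinner (T (S x)) y = cinner x (T (S y))"
    using adjL[OF adj bop_l2[OF bS] y] adjR[OF adj bop_l2[OF bS] x] by simp
qed



lemma A_bop: "u \<in> compact_cstar blk \<Longrightarrow> bounded_op u"
  unfolding compact_cstar_def compact_op_def by auto

lemma A_blk: "u \<in> compact_cstar blk \<Longrightarrow> x \<in> l2 \<Longrightarrow> u (block_proj blk k x) = block_proj blk k (u x)"
  unfolding compact_cstar_def by auto

lemma A_net: "u \<in> compact_cstar blk \<Longrightarrow> \<epsilon> > 0 \<Longrightarrow> \<exists>F. finite F \<and> F \<subseteq> l2 \<and>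
        (\<forall>x\<in>l2. vnorm x \<le> 1 \<longrightarrow> (\<exists>f\<in>F. vnorm (\<lambda>i. u x i - f i) < \<epsilon>))"
  unfolding compact_cstar_def compact_op_def by auto

lemma A_intro: "bounded_op u \<Longrightarrow> (\<And>\<epsilon>. \<epsilon> > 0 \<Longrightarrow> \<exists>F. finite F \<and> F \<subseteq> l2 \<and>
        (\<forall>x\<in>l2. vnorm x \<le> 1 \<longrightarrow> (\<exists>f\<in>F. vnorm (\<lambda>i. u x i - f i) < \<epsilon>))) \<Longrightarrow>
   (\<And>k x. x \<in> l2 \<Longrightarrow> u (block_proj blk k x) = block_proj blk k (u x)) \<Longrightarrow> u \<in> compact_cstar blk"
  unfolding compact_cstar_def compact_op_def by auto

lemma bp_l2: "x \<in> l2 \<Longrightarrow> block_proj blk k x \<in> l2"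
  unfolding l2_def mem_Collect_eq block_proj_def
  by (rule summable_on_comparison_test[of "\<lambda>i. (cmod (x i))\<^sup>2"]) auto

lemma bp_sa: "cinner (block_proj blk k x) y = cinner x (block_proj blk k y)"
  unfolding cinner_def block_proj_def by (rule infsum_cong) auto

lemma adj_blk:
  fixes u U :: "'i op"
  assumes u: "u \<in> compact_cstar blk" and adj: "is_adj u U" and y: "y \<in> l2"
  shows "U (block_proj blk k y) = block_proj blk k (U y)"
proof (rule vec_ext)
  have bU: "bounded_op U" using adj by (rule adj_bop)
  have bu: "bounded_op u" using u by (rule A_bop)
  show "U (block_proj blk k y) \<in> l2" by (rule bop_l2[OF bU])
  show "block_proj blk k (U y) \<in> l2" by (rule bp_l2[OF bop_l2[OF bU]])
  fix x :: "'i vec" assume x: "x \<in> l2"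
  have "cinner x (U (block_proj blk k y)) = cinner (u x) (block_proj blk k y)"
    by (rule adjL[OF adj x bp_l2[OF y], symmetric])
  also have "\<dots> = cinner (block_proj blk k (u x)) y" by (simp add: bp_sa)
  also have "\<dots> = cinner (u (block_proj blk k x)) y" using A_blk[OF u x] by simp
  also have "\<dots> = cinner (block_proj blk k x) (U y)" by (rule adjL[OF adj bp_l2[OF x] y])
  also have "\<dots> = cinner x (block_proj blk k (U y))" by (simp add: bp_sa)
  finally show "cinner x (U (block_proj blk k y)) = cinner x (block_proj blk k (U y))" .
qed

lemma bop_opzero: "bounded_op op_zero"
  unfolding bounded_op_def op_zero_def by (auto intro!: exI[of _ 0])

lemma A_zero: "op_zero \<in> compact_cstar blk"
proof (rule A_intro[OF bop_opzero])
  fix \<epsilon> :: real assume "\<epsilon> > 0"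
  thus "\<exists>F. finite F \<and> F \<subseteq> l2 \<and> (\<forall>x\<in>l2. vnorm x \<le> 1 \<longrightarrow> (\<exists>f\<in>F. vnorm (\<lambda>i. op_zero x i - f i) < \<epsilon>))"
    by (intro exI[of _ "{\<lambda>i. 0}"]) (auto simp: op_zero_def)
next
  fix k x show "op_zero (block_proj blk k x) = block_proj blk k (op_zero x)"
    by (auto simp: op_zero_def block_proj_def)
qed

lemma bop_opadd: assumes bu: "bounded_op u" and bv: "bounded_op v" shows "bounded_op (op_add u v)"
proof -
  obtain K1 where K1: "\<forall>x\<in>l2. vnorm (u x) \<le> K1 * vnorm x" using bop_bound[OF bu] by blast
  obtain K2 where K2: "\<forall>x\<in>l2. vnorm (v x) \<le> K2 * vnorm x" using bop_bound[OF bv] by blast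
  show ?thesis unfolding bounded_op_def
  proof (intro conjI ballI allI impI)
    fix x :: "'a vec" assume "x \<in> l2" thus "op_add u v x \<in> l2" by (simp add: op_add_def l2_add bop_l2 bu bv)
  next
    fix x :: "'a vec" assume "x \<notin> l2" thus "op_add u v x = (\<lambda>_. 0)" by (simp add: op_add_def bop_off bu bv)
  next
    fix x y :: "'a vec" and c assume x: "x \<in> l2" and y: "y \<in> l2"
    show "op_add u v (\<lambda>i. c * x i + y i) = (\<lambda>i. c * op_add u v x i + op_add u v y i)"
      unfolding op_add_def bop_lin[OF bu x y] bop_lin[OF bv x y] by (simp add: algebra_simps)
  next
    show "\<exists>K. \<forall>x\<in>l2. vnorm (op_add u v x) \<le> K * vnorm x"
    proof (intro exI ballI)
      fix x :: "'a vec" assume x: "x \<in> l2"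
      have "vnorm (op_add u v x) \<le> vnorm (u x) + vnorm (v x)"
        unfolding op_add_def by (rule vnorm_triangle[OF bop_l2[OF bu] bop_l2[OF bv]])
      also have "\<dots> \<le> K1 * vnorm x + K2 * vnorm x" using K1 K2 x by (simp add: add_mono)
      finally show "vnorm (op_add u v x) \<le> (K1 + K2) * vnorm x" by (simp add: algebra_simps)
    qed
  qed
qed

lemma bop_opneg: assumes bu: "bounded_op u" shows "bounded_op (op_neg u)"
proof -
  obtain K1 where K1: "\<forall>x\<in>l2. vnorm (u x) \<le> K1 * vnorm x" using bop_bound[OF bu] by blast
  show ?thesis unfolding bounded_op_def
  proof (intro conjI ballI allI impI)
    fix x :: "'a vec" assume "x \<in> l2" thus "op_neg u x \<in> l2" by (simp add: op_neg_def l2_neg bop_l2 bu)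
  next
    fix x :: "'a vec" assume "x \<notin> l2" thus "op_neg u x = (\<lambda>_. 0)" by (simp add: op_neg_def bop_off bu)
  next
    fix x y :: "'a vec" and c assume x: "x \<in> l2" and y: "y \<in> l2"
    show "op_neg u (\<lambda>i. c * x i + y i) = (\<lambda>i. c * op_neg u x i + op_neg u y i)"
      unfolding op_neg_def bop_lin[OF bu x y] by (simp add: algebra_simps)
  next
    show "\<exists>K. \<forall>x\<in>l2. vnorm (op_neg u x) \<le> K * vnorm x"
      using K1 by (intro exI[of _ K1]) (simp add: op_neg_def vnorm_neg)
  qed
qed

lemma A_add: assumes u: "u \<in> compact_cstar blk" and v: "v \<in> compact_cstar blk"
  shows "op_add u v \<in> compact_cstar blk"
proof (rule A_intro[OF bop_opadd[OF A_bop[OF u] A_bop[OF v]]])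
  fix \<epsilon> :: real assume ep: "\<epsilon> > 0"
  obtain F where F: "finite F" "F \<subseteq> l2" and nF: "\<forall>x\<in>l2. vnorm x \<le> 1 \<longrightarrow> (\<exists>f\<in>F. vnorm (\<lambda>i. u x i - f i) < \<epsilon>/2)"
    using A_net[OF u, of "\<epsilon>/2"] ep by auto
  obtain G where G: "finite G" "G \<subseteq> l2" and nG: "\<forall>x\<in>l2. vnorm x \<le> 1 \<longrightarrow> (\<exists>f\<in>G. vnorm (\<lambda>i. v x i - f i) < \<epsilon>/2)"
    using A_net[OF v, of "\<epsilon>/2"] ep by auto
  define H where "H = (\<lambda>(f, g). (\<lambda>i. f i + g i)) ` (F \<times> G)"
  have "finite H" using F G by (simp add: H_def)
  moreover have "H \<subseteq> l2" using F G by (auto simp: H_def intro!: l2_add)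
  moreover have "\<forall>x\<in>l2. vnorm x \<le> 1 \<longrightarrow> (\<exists>h\<in>H. vnorm (\<lambda>i. op_add u v x i - h i) < \<epsilon>)"
  proof (intro ballI impI)
    fix x :: "'a vec" assume x: "x \<in> l2" and nx: "vnorm x \<le> 1"
    obtain f where f: "f \<in> F" "vnorm (\<lambda>i. u x i - f i) < \<epsilon>/2" using nF x nx by blast
    obtain g where g: "g \<in> G" "vnorm (\<lambda>i. v x i - g i) < \<epsilon>/2" using nG x nx by blast
    have fl: "f \<in> l2" and gl: "g \<in> l2" using f g F G by auto
    have "(\<lambda>i. op_add u v x i - (f i + g i)) = (\<lambda>i. (u x i - f i) + (v x i - g i))"
      by (simp add: op_add_def algebra_simps)
    hence "vnorm (\<lambda>i. op_add u v x i - (f i + g i)) \<le> vnorm (\<lambda>i. u x i - f i) + vnorm (\<lambda>i. v x i - g i)"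
      using vnorm_triangle[OF l2_diff[OF bop_l2[OF A_bop[OF u]] fl] l2_diff[OF bop_l2[OF A_bop[OF v]] gl]] by simp
    also have "\<dots> < \<epsilon>" using f g by simp
    finally show "\<exists>h\<in>H. vnorm (\<lambda>i. op_add u v x i - h i) < \<epsilon>"
      using f g by (intro bexI[of _ "\<lambda>i. f i + g i"]) (auto simp: H_def)
  qed
  ultimately show "\<exists>F. finite F \<and> F \<subseteq> l2 \<and> (\<forall>x\<in>l2. vnorm x \<le> 1 \<longrightarrow> (\<exists>f\<in>F. vnorm (\<lambda>i. op_add u v x i - f i) < \<epsilon>))"
    by blast
next
  fix k and x :: "'a vec" assume x: "x \<in> l2"
  show "op_add u v (block_proj blk k x) = block_proj blk k (op_add u v x)"
    using A_blk[OF u x, of k] A_blk[OF v x, of k] by (auto simp: op_add_def block_proj_def fun_eq_iff)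
qed

lemma A_neg: assumes u: "u \<in> compact_cstar blk" shows "op_neg u \<in> compact_cstar blk"
proof (rule A_intro[OF bop_opneg[OF A_bop[OF u]]])
  fix \<epsilon> :: real assume ep: "\<epsilon> > 0"
  obtain F where F: "finite F" "F \<subseteq> l2" and nF: "\<forall>x\<in>l2. vnorm x \<le> 1 \<longrightarrow> (\<exists>f\<in>F. vnorm (\<lambda>i. u x i - f i) < \<epsilon>)"
    using A_net[OF u ep] by auto
  define H where "H = (\<lambda>f. (\<lambda>i. - f i)) ` F"
  have "finite H" using F by (simp add: H_def)
  moreover have "H \<subseteq> l2" using F by (auto simp: H_def intro!: l2_neg)
  moreover have "\<forall>x\<in>l2. vnorm x \<le> 1 \<longrightarrow> (\<exists>h\<in>H. vnorm (\<lambda>i. op_neg u x i - h i) < \<epsilon>)"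
  proof (intro ballI impI)
    fix x :: "'a vec" assume x: "x \<in> l2" and nx: "vnorm x \<le> 1"
    obtain f where f: "f \<in> F" "vnorm (\<lambda>i. u x i - f i) < \<epsilon>" using nF x nx by blast
    have "vnorm (\<lambda>i. op_neg u x i - (- f i)) = vnorm (\<lambda>i. - (u x i - f i))"
      by (simp add: op_neg_def)
    also have "\<dots> = vnorm (\<lambda>i. u x i - f i)" by (rule vnorm_neg)
    finally show "\<exists>h\<in>H. vnorm (\<lambda>i. op_neg u x i - h i) < \<epsilon>"
      using f by (intro bexI[of _ "\<lambda>i. - f i"]) (auto simp: H_def)
  qed
  ultimately show "\<exists>F. finite F \<and> F \<subseteq> l2 \<and> (\<forall>x\<in>l2. vnorm x \<le> 1 \<longrightarrow> (\<exists>f\<in>F. vnorm (\<lambda>i. op_neg u x i - f i) < \<epsilon>))"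
    by blast
next
  fix k and x :: "'a vec" assume x: "x \<in> l2"
  show "op_neg u (block_proj blk k x) = block_proj blk k (op_neg u x)"
    using A_blk[OF u x, of k] by (auto simp: op_neg_def block_proj_def fun_eq_iff)
qed

lemma op_sum_empty: "op_sum {} = op_zero"
  by (simp add: op_sum_def op_zero_def)

lemma op_sum_insert: "finite F \<Longrightarrow> a \<notin> F \<Longrightarrow> op_sum (insert a F) = op_add a (op_sum F)"
  by (simp add: op_sum_def op_add_def)

lemma A_sum: "finite F \<Longrightarrow> F \<subseteq> compact_cstar blk \<Longrightarrow> op_sum F \<in> compact_cstar blk"
proof (induction F rule: finite_induct)
  case empty then show ?case by (simp add: op_sum_empty A_zero)
next
  case (insert a F) then show ?case by (simp add: op_sum_insert A_add)
qed

lemma A_comp: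
  assumes u: "u \<in> compact_cstar blk" and bB: "bounded_op B" and cB: "\<And>x. x \<in> l2 \<Longrightarrow> vnorm (B x) \<le> vnorm x"
    and blkB: "\<And>k x. x \<in> l2 \<Longrightarrow> B (block_proj blk k x) = block_proj blk k (B x)"
  shows "(\<lambda>x. u (B x)) \<in> compact_cstar blk"
proof (rule A_intro[OF bop_comp[OF A_bop[OF u] bB]])
  fix \<epsilon> :: real assume ep: "\<epsilon> > 0"
  obtain F where F: "finite F" "F \<subseteq> l2" and nF: "\<forall>x\<in>l2. vnorm x \<le> 1 \<longrightarrow> (\<exists>f\<in>F. vnorm (\<lambda>i. u x i - f i) < \<epsilon>)"
    using A_net[OF u ep] by auto
  have "\<forall>x\<in>l2. vnorm x \<le> 1 \<longrightarrow> (\<exists>f\<in>F. vnorm (\<lambda>i. u (B x) i - f i) < \<epsilon>)"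
  proof (intro ballI impI)
    fix x :: "'a vec" assume x: "x \<in> l2" and nx: "vnorm x \<le> 1"
    have "B x \<in> l2" by (rule bop_l2[OF bB])
    moreover have "vnorm (B x) \<le> 1" using cB[OF x] nx by simp
    ultimately show "\<exists>f\<in>F. vnorm (\<lambda>i. u (B x) i - f i) < \<epsilon>" using nF by blast
  qed
  thus "\<exists>F. finite F \<and> F \<subseteq> l2 \<and> (\<forall>x\<in>l2. vnorm x \<le> 1 \<longrightarrow> (\<exists>f\<in>F. vnorm (\<lambda>i. u (B x) i - f i) < \<epsilon>))"
    using F by blast
next
  fix k and x :: "'a vec" assume x: "x \<in> l2"
  show "u (B (block_proj blk k x)) = block_proj blk k (u (B x))"
    using blkB[OF x] A_blk[OF u bop_l2[OF bB]] by simp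
qed



lemma trip_self: "trip e e e = e \<Longrightarrow> e (adjoint e (e x)) = e x"
proof
  fix i assume "trip e e e = e"
  hence "trip e e e x i = e x i" by simp
  thus "e (adjoint e (e x)) i = e x i" unfolding trip_def by simp
qed

lemma bop_fsum: "finite F \<Longrightarrow> (\<And>v. v \<in> F \<Longrightarrow> bounded_op (g v)) \<Longrightarrow> bounded_op (\<lambda>y i. \<Sum>v\<in>F. g v y i)"
proof (induction F rule: finite_induct)
  case empty then show ?case using bop_opzero by (simp add: op_zero_def)
next
  case (insert a F)
  have "(\<lambda>y i. \<Sum>v\<in>insert a F. g v y i) = op_add (g a) (\<lambda>y i. \<Sum>v\<in>F. g v y i)"
    using insert by (simp add: op_add_def)
  moreover have "bounded_op (op_add (g a) (\<lambda>y i. \<Sum>v\<in>F. g v y i))"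
    by (rule bop_opadd) (use insert in auto)
  ultimately show ?case by simp
qed

lemma comb3:
  fixes g :: "'a \<Rightarrow> 'a \<Rightarrow> 'a \<Rightarrow> complex"
  assumes F: "finite F"
    and H1: "\<And>u v t. u \<in> F \<Longrightarrow> v \<in> F \<Longrightarrow> t \<in> F \<Longrightarrow> u \<noteq> v \<Longrightarrow> g u v t + g t v u = 0"
    and H2: "\<And>v. v \<in> F \<Longrightarrow> g v v v = h v"
  shows "(\<Sum>u\<in>F. \<Sum>v\<in>F. \<Sum>t\<in>F. g u v t) = (\<Sum>v\<in>F. h v)"
proof -
  have inner: "(\<Sum>u\<in>F. \<Sum>t\<in>F. g u v t) = h v" if v: "v \<in> F" for v
  proof -
    have "(\<Sum>u\<in>F. \<Sum>t\<in>F. g t v u) = (\<Sum>u\<in>F. \<Sum>t\<in>F. g u v t)" by (rule sum.swap)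
    hence "2 * (\<Sum>u\<in>F. \<Sum>t\<in>F. g u v t) = (\<Sum>u\<in>F. \<Sum>t\<in>F. g u v t + g t v u)"
      by (simp add: sum.distrib)
    also have "\<dots> = (\<Sum>u\<in>F. \<Sum>t\<in>F. if u = v then (if t = v then 2 * h v else 0) else 0)"
    proof (intro sum.cong refl)
      fix u t assume u: "u \<in> F" and t: "t \<in> F"
      show "g u v t + g t v u = (if u = v then (if t = v then 2 * h v else 0) else 0)"
      proof (cases "u = v")
        case True
        show ?thesis
        proof (cases "t = v")
          case True then show ?thesis using \<open>u = v\<close> H2[OF v] by simp
        next
          case False
          have "g t v u + g u v t = 0" using H1[OF t v u False] by simp
          then show ?thesis using False \<open>u = v\<close> by (simp add: add.commute)
        qed
      next
        case False then show ?thesis using H1[OF u v t False] by simp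
      qed
    qed
    also have "\<dots> = (\<Sum>u\<in>F. if u = v then 2 * h v else 0)"
      by (rule sum.cong) (use F v in auto)
    also have "\<dots> = 2 * h v" using F v by simp
    finally show ?thesis by simp
  qed
  have "(\<Sum>u\<in>F. \<Sum>v\<in>F. \<Sum>t\<in>F. g u v t) = (\<Sum>v\<in>F. \<Sum>u\<in>F. \<Sum>t\<in>F. g u v t)" by (rule sum.swap)
  also have "\<dots> = (\<Sum>v\<in>F. h v)" by (rule sum.cong) (simp_all add: inner)
  finally show ?thesis .
qed

lemma minimal_in: "minimal_trip A u \<Longrightarrow> u \<in> A"
  unfolding minimal_trip_def tripotent_def by auto

lemma minimal_trip_eq: "minimal_trip A u \<Longrightarrow> trip u u u = u"
  unfolding minimal_trip_def tripotent_def by auto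

lemma frt_pi:
  fixes w :: "'i op" and blk :: "'i \<Rightarrow> 'k"
  assumes frt: "finite_rank_trip (compact_cstar blk) w"
  shows "w \<in> compact_cstar blk" "\<And>x. w (adjoint w (w x)) = w x"
proof -
  let ?A = "compact_cstar blk"
  obtain F where F: "finite F" and mF: "\<forall>u\<in>F. minimal_trip ?A u"
    and oF: "\<forall>u\<in>F. \<forall>v\<in>F. u \<noteq> v \<longrightarrow> orth ?A u v" and wF: "w = op_sum F"
    using frt unfolding finite_rank_trip_def by blast
  have FA: "F \<subseteq> ?A" using mF minimal_in by blast
  show wA: "w \<in> ?A" unfolding wF by (rule A_sum[OF F FA])
  have bF: "\<And>u. u \<in> F \<Longrightarrow> bounded_op u" using FA A_bop by blast
  have aF: "\<And>u. u \<in> F \<Longrightarrow> is_adj u (adjoint u)" using bF adjoint_is_adj by blast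
  have baF: "\<And>u. u \<in> F \<Longrightarrow> bounded_op (adjoint u)" using aF adj_bop by blast
  define W where "W = (\<lambda>y i. \<Sum>v\<in>F. adjoint v y i)"
  have bW: "bounded_op W" unfolding W_def by (rule bop_fsum[OF F baF])
  have bw: "bounded_op w" by (rule A_bop[OF wA])
  have wx: "\<And>x. w x = (\<lambda>i. \<Sum>u\<in>F. u x i)" by (simp add: wF op_sum_def)
  have "is_adj w W" unfolding is_adj_def
  proof (intro conjI bW ballI)
    fix x y :: "'i vec" assume x: "x \<in> l2" and y: "y \<in> l2"
    have "cinner (w x) y = (\<Sum>u\<in>F. cinner (u x) y)"
      unfolding wx by (rule cinner_sum_left[OF F _ y]) (simp add: bop_l2 bF)
    also have "\<dots> = (\<Sum>u\<in>F. cinner x (adjoint u y))"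
      by (rule sum.cong) (simp_all add: adjL[OF aF x y])
    also have "\<dots> = cinner x (W y)"
      unfolding W_def by (rule cinner_sum_right[OF F _ x, symmetric]) (simp add: bop_l2 baF)
    finally show "cinner (w x) y = cinner x (W y)" .
  qed
  hence Weq: "adjoint w = W" using adj_unique adjoint_is_adj[OF bw] by blast
  fix x :: "'i vec"
  have tl: "\<And>t. t \<in> F \<Longrightarrow> t x \<in> l2" by (rule bop_l2[OF bF])
  have step1: "\<And>v. v \<in> F \<Longrightarrow> adjoint v (w x) = (\<lambda>k. \<Sum>t\<in>F. adjoint v (t x) k)"
    unfolding wx by (rule bop_sum[OF baF F tl])
  have Wwx: "W (w x) = (\<lambda>k. \<Sum>v\<in>F. \<Sum>t\<in>F. adjoint v (t x) k)"
    unfolding W_def using step1 by simp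
  have vtl: "\<And>v. v \<in> F \<Longrightarrow> (\<lambda>k. \<Sum>t\<in>F. adjoint v (t x) k) \<in> l2"
  proof -
    fix v assume v: "v \<in> F"
    show "(\<lambda>k. \<Sum>t\<in>F. adjoint v (t x) k) \<in> l2" by (rule l2_sum[OF F]) (rule bop_l2[OF baF[OF v]])
  qed
  have utl: "\<And>v t. v \<in> F \<Longrightarrow> t \<in> F \<Longrightarrow> adjoint v (t x) \<in> l2" by (rule bop_l2[OF baF])
  have uW: "\<And>u. u \<in> F \<Longrightarrow> u (W (w x)) = (\<lambda>k. \<Sum>v\<in>F. \<Sum>t\<in>F. u (adjoint v (t x)) k)"
  proof -
    fix u assume u: "u \<in> F"
    have "u (W (w x)) = (\<lambda>k. \<Sum>v\<in>F. u (\<lambda>k. \<Sum>t\<in>F. adjoint v (t x) k) k)"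
      unfolding Wwx by (rule bop_sum[OF bF[OF u] F vtl])
    also have "\<dots> = (\<lambda>k. \<Sum>v\<in>F. \<Sum>t\<in>F. u (adjoint v (t x)) k)"
    proof -
      have "\<And>v. v \<in> F \<Longrightarrow> u (\<lambda>k. \<Sum>t\<in>F. adjoint v (t x) k) = (\<lambda>k. \<Sum>t\<in>F. u (adjoint v (t x)) k)"
      proof -
        fix v assume v: "v \<in> F"
        show "u (\<lambda>k. \<Sum>t\<in>F. adjoint v (t x) k) = (\<lambda>k. \<Sum>t\<in>F. u (adjoint v (t x)) k)"
          by (rule bop_sum[OF bF[OF u] F]) (rule utl[OF v])
      qed
      thus ?thesis by simp
    qed
    finally show "u (W (w x)) = (\<lambda>k. \<Sum>v\<in>F. \<Sum>t\<in>F. u (adjoint v (t x)) k)" .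
  qed
  show "w (adjoint w (w x)) = w x"
  proof
    fix i
    have "w (adjoint w (w x)) i = (\<Sum>u\<in>F. \<Sum>v\<in>F. \<Sum>t\<in>F. u (adjoint v (t x)) i)"
      unfolding Weq by (subst wx) (simp add: uW)
    also have "\<dots> = (\<Sum>v\<in>F. v x i)"
    proof (rule comb3[OF F])
      fix u v t assume u: "u \<in> F" and v: "v \<in> F" and t: "t \<in> F" and uv: "u \<noteq> v"
      have "orth ?A u v" using oF u v uv by blast
      hence "trip u v t = op_zero" unfolding orth_def using FA t by blast
      hence "trip u v t x i = 0" by (simp add: op_zero_def)
      thus "u (adjoint v (t x)) i + t (adjoint v (u x)) i = 0" unfolding trip_def by simp
    next
      fix v assume v: "v \<in> F"
      show "v (adjoint v (v x)) i = v x i" using trip_self[OF minimal_trip_eq] mF v by metis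
    qed
    also have "\<dots> = w x i" by (simp add: wx)
    finally show "w (adjoint w (w x)) i = w x i" .
  qed
qed



lemma trip_add:
  assumes be: "bounded_op e" and u1: "\<And>x. u1 x \<in> l2" and u2: "\<And>x. u2 x \<in> l2"
  shows "trip e e (op_add u1 u2) = op_add (trip e e u1) (trip e e u2)"
proof (intro ext)
  fix x i
  have bE: "bounded_op (adjoint e)" using adjoint_is_adj[OF be] adj_bop by blast
  have "adjoint e (op_add u1 u2 x) = (\<lambda>i. adjoint e (u1 x) i + adjoint e (u2 x) i)"
    unfolding op_add_def by (rule bop_add[OF bE u1 u2])
  hence "e (adjoint e (op_add u1 u2 x)) = (\<lambda>i. e (adjoint e (u1 x)) i + e (adjoint e (u2 x)) i)"
    using bop_add[OF be bop_l2[OF bE] bop_l2[OF bE]] by simp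
  thus "trip e e (op_add u1 u2) x i = op_add (trip e e u1) (trip e e u2) x i"
    unfolding trip_def by (simp add: op_add_def add_divide_distrib)
qed

lemma trip_smult:
  assumes be: "bounded_op e" and u: "\<And>x. u x \<in> l2"
  shows "trip e e (op_smult c u) = op_smult c (trip e e u)"
proof (intro ext)
  fix x i
  have bE: "bounded_op (adjoint e)" using adjoint_is_adj[OF be] adj_bop by blast
  have "adjoint e (op_smult c u x) = (\<lambda>i. c * adjoint e (u x) i)"
    unfolding op_smult_def by (rule bop_scale[OF bE u])
  hence "e (adjoint e (op_smult c u x)) = (\<lambda>i. c * e (adjoint e (u x)) i)"
    using bop_scale[OF be bop_l2[OF bE]] by simp
  thus "trip e e (op_smult c u) x i = op_smult c (trip e e u) x i"
    unfolding trip_def by (simp add: op_smult_def algebra_simps)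
qed

lemma trip_neg:
  assumes be: "bounded_op e" and u: "\<And>x. u x \<in> l2"
  shows "trip e e (op_neg u) = op_neg (trip e e u)"
proof -
  have "op_neg u = op_smult (-1) u" by (simp add: op_neg_def op_smult_def)
  moreover have "op_neg (trip e e u) = op_smult (-1) (trip e e u)" by (simp add: op_neg_def op_smult_def)
  ultimately show ?thesis using trip_smult[OF be u] by simp
qed

lemma l2_sqrt_facts:
  fixes \<epsilon> r s t :: real
  assumes "0 < \<epsilon>" "\<epsilon> \<le> 1/4"
  shows "sqrt (2 * \<epsilon>) \<le> (3/2) * sqrt \<epsilon>" and "sqrt (4 * \<epsilon>) = 2 * sqrt \<epsilon>"
proof -
  have "sqrt (2 * \<epsilon>) = sqrt 2 * sqrt \<epsilon>" by (simp add: real_sqrt_mult)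
  moreover have "sqrt 2 \<le> (3/2::real)"
    by (rule real_le_lsqrt) (simp_all add: power2_eq_square)
  moreover have "sqrt 2 * sqrt \<epsilon> \<le> (3/2) * sqrt \<epsilon>" using \<open>sqrt 2 \<le> 3/2\<close> by (rule mult_right_mono) (use assms in simp)
  ultimately show "sqrt (2 * \<epsilon>) \<le> (3/2) * sqrt \<epsilon>" by simp
  show "sqrt (4 * \<epsilon>) = 2 * sqrt \<epsilon>" by (simp add: real_sqrt_mult)
qed



lemma c_is_minus_one:
  fixes e w E :: "'i op" and c :: complex
  assumes be: "bounded_op e" and bw: "bounded_op w" and aE: "is_adj e E"
    and eEe: "\<And>x. e (E (e x)) = e x"
    and ce: "\<And>x. x \<in> l2 \<Longrightarrow> vnorm (e x) \<le> vnorm x"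
    and cw: "\<And>x. x \<in> l2 \<Longrightarrow> vnorm (w x) \<le> vnorm x"
    and neq: "\<And>x. x \<in> l2 \<Longrightarrow> vnorm (E (e x)) = vnorm (e x)"
    and pyq: "\<And>x. x \<in> l2 \<Longrightarrow> (vnorm x)\<^sup>2 = (vnorm (E (e x)))\<^sup>2 + (vnorm (\<lambda>i. x i - E (e x) i))\<^sup>2"
    and psa: "\<And>x y. x \<in> l2 \<Longrightarrow> y \<in> l2 \<Longrightarrow> cinner (e (E x)) y = cinner x (e (E y))"
    and z0: "\<And>x. e (E (w (E (e x)))) = (\<lambda>i. c * e x i)"
    and nrm: "op_norm (op_sub e w) = 2"
  shows "c = -1"
proof -
  have bE: "bounded_op E" using aE by (rule adj_bop)
  have key: "cmod (c + 1) \<le> 7 * sqrt \<epsilon>" if ep: "0 < \<epsilon>" "\<epsilon> \<le> 1/4" for \<epsilon> :: real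
  proof -
    let ?S = "{vnorm (op_sub e w x) | x. x \<in> l2 \<and> vnorm x \<le> 1}"
    have ne: "?S \<noteq> {}" using l2_zero vnorm_zero by fastforce
    have "2 - \<epsilon> < Sup ?S" using nrm ep unfolding op_norm_def by simp
    then obtain v where "v \<in> ?S" "2 - \<epsilon> < v" using less_cSupE[OF _ ne] by blast
    then obtain x where x: "x \<in> l2" and nx: "vnorm x \<le> 1" and big: "2 - \<epsilon> < vnorm (\<lambda>i. e x i - w x i)"
      by (auto simp: op_sub_def)
    define a where "a = e x"
    define b where "b = w x"
    have al: "a \<in> l2" and bl: "b \<in> l2" using bop_l2 be bw by (auto simp: a_def b_def)
    have na: "vnorm a \<le> 1" using ce[OF x] nx by (simp add: a_def)
    have nb: "vnorm b \<le> 1" using cw[OF x] nx by (simp add: b_def)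
    have tri: "vnorm (\<lambda>i. a i - b i) \<le> vnorm a + vnorm b"
      using vnorm_triangle[OF al l2_neg[OF bl]] vnorm_neg[of b] by simp
    have big': "2 - \<epsilon> < vnorm (\<lambda>i. a i - b i)" using big by (simp add: a_def b_def)
    have na_low: "1 - \<epsilon> < vnorm a" using tri big' nb by linarith
    have e1: "(vnorm (\<lambda>i. a i + b i))\<^sup>2 = (vnorm a)\<^sup>2 + (vnorm b)\<^sup>2 + 2 * Re (cinner a b)"
      by (rule vnorm_expand[OF al bl])
    have e2: "(vnorm (\<lambda>i. a i + - b i))\<^sup>2 = (vnorm a)\<^sup>2 + (vnorm (\<lambda>i. - b i))\<^sup>2 + 2 * Re (cinner a (\<lambda>i. - b i))"
      by (rule vnorm_expand[OF al l2_neg[OF bl]])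
    have e2': "(vnorm (\<lambda>i. a i - b i))\<^sup>2 = (vnorm a)\<^sup>2 + (vnorm b)\<^sup>2 - 2 * Re (cinner a b)"
      using e2 by (simp add: vnorm_neg cinner_neg_right[OF al bl])
    have "(2 - \<epsilon>)\<^sup>2 \<le> (vnorm (\<lambda>i. a i - b i))\<^sup>2"
      using big' ep by (intro power_mono) auto
    moreover have "(vnorm a)\<^sup>2 \<le> 1" "(vnorm b)\<^sup>2 \<le> 1"
      using na nb by (simp_all add: power_le_one)
    moreover have "(2 - \<epsilon>)\<^sup>2 = 4 - 4 * \<epsilon> + \<epsilon>\<^sup>2" by (simp add: power2_eq_square algebra_simps)
    moreover have "0 \<le> \<epsilon>\<^sup>2" by simp
    ultimately have sab: "(vnorm (\<lambda>i. a i + b i))\<^sup>2 \<le> 4 * \<epsilon>"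
      using e1 e2' by linarith
    hence nab: "vnorm (\<lambda>i. a i + b i) \<le> 2 * sqrt \<epsilon>"
      using l2_sqrt_facts(2)[OF ep] by (metis real_le_rsqrt)
    define d where "d = (\<lambda>i. x i - E (e x) i)"
    have qxl: "E (e x) \<in> l2" by (rule bop_l2[OF bE])
    have dl: "d \<in> l2" unfolding d_def by (rule l2_diff[OF x qxl])
    have nq: "vnorm (E (e x)) = vnorm a" using neq[OF x] by (simp add: a_def)
    have "(vnorm d)\<^sup>2 = (vnorm x)\<^sup>2 - (vnorm a)\<^sup>2" using pyq[OF x] nq by (simp add: d_def)
    also have "\<dots> \<le> 1 - (1 - \<epsilon>)\<^sup>2"
    proof -
      have "(vnorm x)\<^sup>2 \<le> 1" using nx by (simp add: power_le_one)
      moreover have "(1 - \<epsilon>)\<^sup>2 \<le> (vnorm a)\<^sup>2" using na_low ep by (intro power_mono) auto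
      ultimately show ?thesis by simp
    qed
    also have "\<dots> \<le> 2 * \<epsilon>" using ep by (simp add: power2_eq_square algebra_simps)
    finally have "vnorm d \<le> sqrt (2 * \<epsilon>)" by (metis real_le_rsqrt)
    hence nd: "vnorm d \<le> (3/2) * sqrt \<epsilon>" using l2_sqrt_facts(1)[OF ep] by simp
    have nwd: "vnorm (w d) \<le> (3/2) * sqrt \<epsilon>" using cw[OF dl] nd by simp
    have wl: "w (E (e x)) \<in> l2" by (rule bop_l2[OF bw])
    have "c * cinner a a = cinner a (\<lambda>i. c * a i)" by (simp add: cinner_scale_right[OF al al])
    also have "(\<lambda>i. c * a i) = e (E (w (E (e x))))" using z0[of x] by (simp add: a_def)
    also have "cinner a (e (E (w (E (e x))))) = cinner (e (E a)) (w (E (e x)))"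
      using psa[OF al wl] by simp
    also have "e (E a) = a" using eEe by (simp add: a_def)
    also have "w (E (e x)) = (\<lambda>i. b i - w d i)"
    proof -
      have "w d = (\<lambda>i. w x i - w (E (e x)) i)" unfolding d_def by (rule bop_diff[OF bw x qxl])
      thus ?thesis by (simp add: b_def)
    qed
    also have "cinner a (\<lambda>i. b i - w d i) = cinner a b - cinner a (w d)"
      by (rule cinner_diff_right[OF al bl bop_l2[OF bw]])
    also have "cinner a b = cinner a (\<lambda>i. a i + b i) - cinner a a"
      using cinner_add_right[OF al al bl] by simp
    finally have id: "(c + 1) * cinner a a = cinner a (\<lambda>i. a i + b i) - cinner a (w d)"
      by (simp add: algebra_simps)
    have abl: "(\<lambda>i. a i + b i) \<in> l2" by (rule l2_add[OF al bl])
    have "cmod ((c + 1) * cinner a a) \<le> cmod (cinner a (\<lambda>i. a i + b i)) + cmod (cinner a (w d))"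
      unfolding id by (rule norm_triangle_ineq4)
    also have "\<dots> \<le> vnorm a * vnorm (\<lambda>i. a i + b i) + vnorm a * vnorm (w d)"
      by (intro add_mono cinner_cs al abl bop_l2[OF bw])
    also have "\<dots> \<le> 1 * (2 * sqrt \<epsilon>) + 1 * ((3/2) * sqrt \<epsilon>)"
      using na nab nwd by (intro add_mono mult_mono) auto
    finally have A1: "cmod (c + 1) * (vnorm a)\<^sup>2 \<le> (7/2) * sqrt \<epsilon>"
      by (simp add: cinner_self[OF al] norm_mult norm_power)
    have "0 \<le> \<epsilon> * \<epsilon>" by simp
    moreover have "(1 - \<epsilon>)\<^sup>2 = 1 - 2 * \<epsilon> + \<epsilon> * \<epsilon>" by (simp add: power2_eq_square algebra_simps)
    ultimately have "(1/2::real) \<le> (1 - \<epsilon>)\<^sup>2" using ep by linarith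
    also have "(1 - \<epsilon>)\<^sup>2 \<le> (vnorm a)\<^sup>2" using na_low ep by (intro power_mono) auto
    finally have A2: "1/2 \<le> (vnorm a)\<^sup>2" .
    have "cmod (c + 1) * (1/2) \<le> cmod (c + 1) * (vnorm a)\<^sup>2"
      using A2 by (intro mult_left_mono) auto
    with A1 show ?thesis by simp
  qed
  show "c = -1"
  proof (rule ccontr)
    assume "c \<noteq> -1"
    hence "c + 1 \<noteq> 0" using eq_neg_iff_add_eq_0[of c 1] by simp
    hence dp: "cmod (c + 1) > 0" by simp
    define m where "m = cmod (c + 1)"
    define \<epsilon> where "\<epsilon> = min (1/4) ((m / 14)\<^sup>2)"
    have ep: "0 < \<epsilon>" "\<epsilon> \<le> 1/4" using dp by (auto simp: \<epsilon>_def m_def)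
    have "sqrt \<epsilon> \<le> sqrt ((m / 14)\<^sup>2)" by (rule real_sqrt_le_mono) (simp add: \<epsilon>_def)
    also have "\<dots> = m / 14" using dp by (simp add: m_def)
    finally have "7 * sqrt \<epsilon> \<le> m / 2" by simp
    moreover have "sqrt \<epsilon> > 0" using ep by simp
    ultimately show False using key[OF ep] dp unfolding m_def by linarith
  qed
qed



theorem lemma3p5:
  fixes blk :: "'i \<Rightarrow> 'k" and e w :: "'i op"
  assumes "finite_rank_trip (compact_cstar blk) e"
    and "finite_rank_trip (compact_cstar blk) w"
    and "minimal_trip (compact_cstar blk) e"
    and "op_norm (op_sub e w) = 2"
  shows "w = op_add (op_neg e) (P0 (compact_cstar blk) e w)"
proof -
  let ?A = "compact_cstar blk"
  have eA: "e \<in> ?A" using assms(3) by (rule minimal_in)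
  have eee: "trip e e e = e" using assms(3) by (rule minimal_trip_eq)
  have p2: "peirce2 ?A e = {op_smult c e | c. True}" using assms(3) unfolding minimal_trip_def by blast
  have be: "bounded_op e" by (rule A_bop[OF eA])
  define E where "E = adjoint e"
  have aE: "is_adj e E" unfolding E_def by (rule adjoint_is_adj[OF be])
  have bE: "bounded_op E" by (rule adj_bop[OF aE])
  have eEe: "\<And>x. e (E (e x)) = e x" unfolding E_def by (rule trip_self[OF eee])
  have wA: "w \<in> ?A" and wWw0: "\<And>x. w (adjoint w (w x)) = w x" using frt_pi[OF assms(2)] by auto
  have bw: "bounded_op w" by (rule A_bop[OF wA])
  define W where "W = adjoint w"
  have aW: "is_adj w W" unfolding W_def by (rule adjoint_is_adj[OF bw])
  have bW: "bounded_op W" by (rule adj_bop[OF aW])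
  have wWw: "\<And>x. w (W (w x)) = w x" unfolding W_def by (rule wWw0)
  have aE': "is_adj E e" by (rule adj_sym[OF be aE])
  have EeE: "\<And>y. y \<in> l2 \<Longrightarrow> E (e (E y)) = E y" by (rule pi_dual[OF be aE eEe])
  have aW': "is_adj W w" by (rule adj_sym[OF bw aW])
  have WwW: "\<And>y. y \<in> l2 \<Longrightarrow> W (w (W y)) = W y" by (rule pi_dual[OF bw aW wWw])
  have ce: "\<And>x. x \<in> l2 \<Longrightarrow> vnorm (e x) \<le> vnorm x" by (rule pi_norm(2)[OF be aE eEe])
  have cw: "\<And>x. x \<in> l2 \<Longrightarrow> vnorm (w x) \<le> vnorm x" by (rule pi_norm(2)[OF bw aW wWw])
  have cE: "\<And>y. y \<in> l2 \<Longrightarrow> vnorm (E y) \<le> vnorm y" by (rule pi_norm(2)[OF bE aE' EeE])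
  have cW: "\<And>y. y \<in> l2 \<Longrightarrow> vnorm (W y) \<le> vnorm y" by (rule pi_norm(2)[OF bW aW' WwW])
  have neq: "\<And>x. x \<in> l2 \<Longrightarrow> vnorm (E (e x)) = vnorm (e x)" by (rule pi_norm(1)[OF be aE eEe])
  have neq2: "\<And>y. y \<in> l2 \<Longrightarrow> vnorm (e (E y)) = vnorm (E y)" by (rule pi_norm(1)[OF bE aE' EeE])
  note PJ = pi_projs[OF be aE eEe]
  have pyq: "\<And>x. x \<in> l2 \<Longrightarrow> (vnorm x)\<^sup>2 = (vnorm (E (e x)))\<^sup>2 + (vnorm (\<lambda>i. x i - E (e x) i))\<^sup>2"
    using proj_pyth[OF PJ(1)] PJ(2) PJ(3) by blast
  have pyp: "\<And>x. x \<in> l2 \<Longrightarrow> (vnorm x)\<^sup>2 = (vnorm (e (E x)))\<^sup>2 + (vnorm (\<lambda>i. x i - e (E x) i))\<^sup>2"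
    using proj_pyth[OF PJ(4)] PJ(5) PJ(6) by blast
  have el: "\<And>x. e x \<in> l2" by (rule bop_l2[OF be])
  have El: "\<And>x. E x \<in> l2" by (rule bop_l2[OF bE])
  have wl: "\<And>x. w x \<in> l2" by (rule bop_l2[OF bw])
  have Wl: "\<And>x. W x \<in> l2" by (rule bop_l2[OF bW])
  define B where "B = (\<lambda>x. E (w (E (e x))))"
  have bB: "bounded_op B" unfolding B_def
    by (rule bop_comp[OF bE bop_comp[OF bw bop_comp[OF bE be]]])
  have cB: "\<And>x. x \<in> l2 \<Longrightarrow> vnorm (B x) \<le> vnorm x"
  proof -
    fix x :: "'i vec" assume x: "x \<in> l2"
    have "vnorm (B x) \<le> vnorm (w (E (e x)))" unfolding B_def by (rule cE[OF wl])
    also have "\<dots> \<le> vnorm (E (e x))" by (rule cw[OF El])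
    also have "\<dots> \<le> vnorm (e x)" by (rule cE[OF el])
    also have "\<dots> \<le> vnorm x" by (rule ce[OF x])
    finally show "vnorm (B x) \<le> vnorm x" .
  qed
  have blkB: "\<And>k x. x \<in> l2 \<Longrightarrow> B (block_proj blk k x) = block_proj blk k (B x)"
  proof -
    fix k and x :: "'i vec" assume x: "x \<in> l2"
    show "B (block_proj blk k x) = block_proj blk k (B x)"
      unfolding B_def
      by (simp add: A_blk[OF eA x] adj_blk[OF eA aE el] A_blk[OF wA El] adj_blk[OF eA aE wl])
  qed
  have z0A: "(\<lambda>x. e (B x)) \<in> ?A" by (rule A_comp[OF eA bB cB blkB])
  have "trip e e (\<lambda>x. e (B x)) = (\<lambda>x. e (B x))"
  proof (intro ext)
    fix x i
    have "B (E (e x)) = B x" by (simp add: B_def eEe)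
    thus "trip e e (\<lambda>x. e (B x)) x i = e (B x) i"
      unfolding trip_def E_def[symmetric] by (simp add: eEe)
  qed
  hence "(\<lambda>x. e (B x)) \<in> peirce2 ?A e" using z0A unfolding peirce2_def by blast
  then obtain c where "(\<lambda>x. e (B x)) = op_smult c e" using p2 by blast
  hence z0c: "\<And>x. e (E (w (E (e x)))) = (\<lambda>i. c * e x i)"
    by (simp add: B_def op_smult_def fun_eq_iff)
  have c1: "c = -1" by (rule c_is_minus_one[OF be bw aE eEe ce cw neq pyq PJ(6) z0c assms(4)])
  have zq: "\<And>x. e (E (w (E (e x)))) = (\<lambda>i. - e x i)" using z0c c1 by simp
  have wq: "\<And>x. w (E (e x)) = (\<lambda>i. - e x i)"
  proof -
    fix x :: "'i vec"
    show "w (E (e x)) = (\<lambda>i. - e x i)"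
    proof (cases "x \<in> l2")
      case False
      then show ?thesis by (simp add: bop_off[OF be False] bop_zero[OF bE] bop_zero[OF bw])
    next
      case True
      define v where "v = w (E (e x))"
      have vl: "v \<in> l2" by (simp add: v_def wl)
      have pv: "e (E v) = (\<lambda>i. - e x i)" using zq by (simp add: v_def)
      have nv: "vnorm v \<le> vnorm (e x)" using cw[OF El[of "e x"]] neq[OF True] by (simp add: v_def)
      have npv: "vnorm (e (E v)) = vnorm (e x)" by (simp add: pv vnorm_neg)
      have py: "(vnorm v)\<^sup>2 = (vnorm (e (E v)))\<^sup>2 + (vnorm (\<lambda>i. v i - e (E v) i))\<^sup>2" by (rule pyp[OF vl])
      have "(vnorm v)\<^sup>2 \<le> (vnorm (e x))\<^sup>2" using nv by (intro power_mono) auto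
      hence "(vnorm (\<lambda>i. v i - e (E v) i))\<^sup>2 \<le> 0" using py npv by simp
      hence "vnorm (\<lambda>i. v i - e (E v) i) = 0" by simp
      hence "(\<lambda>i. v i - e (E v) i) = (\<lambda>i. 0)" by (rule vnorm_zero_imp[OF l2_diff[OF vl el]])
      hence "v = e (E v)" by (simp add: fun_eq_iff)
      thus ?thesis using pv by (simp add: v_def)
    qed
  qed
  have Wp: "\<And>y. y \<in> l2 \<Longrightarrow> W (e (E y)) = (\<lambda>i. - E y i)"
  proof -
    fix y :: "'i vec" assume y: "y \<in> l2"
    define u where "u = W (e (E y))"
    have ul: "u \<in> l2" by (simp add: u_def Wl)
    have qu: "E (e u) = (\<lambda>i. - E y i)"
    proof (rule vec_ext)
      show "E (e u) \<in> l2" by (rule El)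
      show "(\<lambda>i. - E y i) \<in> l2" by (rule l2_neg[OF El])
      fix x :: "'i vec" assume x: "x \<in> l2"
      have "cinner x (E (e u)) = cinner (E (e x)) u" using PJ(3)[OF x ul] by simp
      also have "\<dots> = cinner (w (E (e x))) (e (E y))"
        unfolding u_def by (rule adjL[OF aW El el, symmetric])
      also have "\<dots> = cinner (\<lambda>i. - e x i) (e (E y))" using wq by simp
      also have "\<dots> = - cinner (e x) (e (E y))" by (rule cinner_neg_left[OF el el])
      also have "cinner (e x) (e (E y)) = cinner (e (E (e x))) y" using PJ(6)[OF el y] by simp
      also have "e (E (e x)) = e x" by (rule eEe)
      also have "cinner (e x) y = cinner x (E y)" by (rule adjL[OF aE x y])
      finally show "cinner x (E (e u)) = cinner x (\<lambda>i. - E y i)" using cinner_neg_right[OF x El] by simp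
    qed
    have nu: "vnorm u \<le> vnorm (E y)" using cW[OF el[of "E y"]] neq2[OF y] by (simp add: u_def)
    have nqu: "vnorm (E (e u)) = vnorm (E y)" by (simp add: qu vnorm_neg)
    have py: "(vnorm u)\<^sup>2 = (vnorm (E (e u)))\<^sup>2 + (vnorm (\<lambda>i. u i - E (e u) i))\<^sup>2" by (rule pyq[OF ul])
    have "(vnorm u)\<^sup>2 \<le> (vnorm (E y))\<^sup>2" using nu by (intro power_mono) auto
    hence "(vnorm (\<lambda>i. u i - E (e u) i))\<^sup>2 \<le> 0" using py nqu by simp
    hence "vnorm (\<lambda>i. u i - E (e u) i) = 0" by simp
    hence "(\<lambda>i. u i - E (e u) i) = (\<lambda>i. 0)" by (rule vnorm_zero_imp[OF l2_diff[OF ul El]])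
    hence "u = E (e u)" by (simp add: fun_eq_iff)
    thus "W (e (E y)) = (\<lambda>i. - E y i)" using qu by (simp add: u_def)
  qed
  have pw: "\<And>x. e (E (w x)) = (\<lambda>i. - e x i)"
  proof -
    fix x :: "'i vec"
    show "e (E (w x)) = (\<lambda>i. - e x i)"
    proof (cases "x \<in> l2")
      case False
      then show ?thesis by (simp add: bop_off[OF be False] bop_off[OF bw False] bop_zero[OF bE] bop_zero[OF be])
    next
      case x: True
      show ?thesis
      proof (rule vec_ext)
        show "e (E (w x)) \<in> l2" by (rule el)
        show "(\<lambda>i. - e x i) \<in> l2" by (rule l2_neg[OF el])
        fix y :: "'i vec" assume y: "y \<in> l2"
        have "cinner y (e (E (w x))) = cinner (e (E y)) (w x)" using PJ(6)[OF y wl] by simp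
        also have "\<dots> = cinner (W (e (E y))) x" by (rule adjR[OF aW x el, symmetric])
        also have "\<dots> = cinner (\<lambda>i. - E y i) x" using Wp[OF y] by simp
        also have "\<dots> = - cinner (E y) x" by (rule cinner_neg_left[OF El x])
        also have "cinner (E y) x = cinner y (e x)" by (rule adjR[OF aE x y])
        finally show "cinner y (e (E (w x))) = cinner y (\<lambda>i. - e x i)" using cinner_neg_right[OF y el] by simp
      qed
    qed
  qed
  define z where "z = op_add w e"
  have zA: "z \<in> ?A" unfolding z_def by (rule A_add[OF wA eA])
  have Lw: "trip e e w = op_neg e"
    by (intro ext) (simp add: trip_def E_def[symmetric] pw wq op_neg_def)
  have Lz: "trip e e z = op_zero"
    unfolding z_def trip_add[OF be wl el] Lw eee by (simp add: op_add_def op_neg_def op_zero_def)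
  have negA: "op_neg e \<in> ?A" by (rule A_neg[OF eA])
  have Lneg: "trip e e (op_neg e) = op_neg e" using trip_neg[OF be el] eee by simp
  have zeroA: "op_zero \<in> ?A" by (rule A_zero)
  have Lzero: "trip e e op_zero = op_smult (1/2) op_zero"
    by (intro ext) (simp add: trip_def op_zero_def op_smult_def bop_zero[OF adj_bop[OF adjoint_is_adj[OF be]]] bop_zero[OF be])
  have P: "z \<in> peirce0 ?A e \<and> (\<exists>a\<in>peirce2 ?A e. \<exists>b\<in>peirce1 ?A e. w = op_add (op_add a b) z)"
  proof (intro conjI bexI)
    show "z \<in> peirce0 ?A e" using zA Lz by (simp add: peirce0_def)
    show "op_neg e \<in> peirce2 ?A e" using negA Lneg by (simp add: peirce2_def)
    show "op_zero \<in> peirce1 ?A e" using zeroA Lzero by (simp add: peirce1_def)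
    show "w = op_add (op_add (op_neg e) op_zero) z"
      by (simp add: z_def op_add_def op_neg_def op_zero_def)
  qed
  have U: "z' = z" if h: "z' \<in> peirce0 ?A e \<and> (\<exists>a\<in>peirce2 ?A e. \<exists>b\<in>peirce1 ?A e. w = op_add (op_add a b) z')" for z'
  proof -
    obtain a b where z'0: "z' \<in> ?A" "trip e e z' = op_zero" and a: "a \<in> ?A" "trip e e a = a"
      and b: "b \<in> ?A" "trip e e b = op_smult (1/2) b" and wd: "w = op_add (op_add a b) z'"
      using h unfolding peirce0_def peirce1_def peirce2_def by blast
    have al: "\<And>x. a x \<in> l2" by (rule bop_l2[OF A_bop[OF a(1)]])
    have bl: "\<And>x. b x \<in> l2" by (rule bop_l2[OF A_bop[OF b(1)]])
    have zl: "\<And>x. z' x \<in> l2" by (rule bop_l2[OF A_bop[OF z'0(1)]])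
    have abl: "\<And>x. op_add a b x \<in> l2" unfolding op_add_def by (rule l2_add[OF al bl])
    have hbl: "\<And>x. op_smult (1/2) b x \<in> l2" unfolding op_smult_def by (rule l2_scale[OF bl])
    have "trip e e w = op_add (op_add (trip e e a) (trip e e b)) (trip e e z')"
      unfolding wd trip_add[OF be abl zl] trip_add[OF be al bl] ..
    hence eq1: "op_neg e = op_add a (op_smult (1/2) b)"
      using Lw a b z'0 by (simp add: fun_eq_iff op_add_def op_zero_def)
    have "trip e e (op_neg e) = trip e e (op_add a (op_smult (1/2) b))" using eq1 by simp
    hence eq2: "op_neg e = op_add a (op_smult (1/2) (op_smult (1/2) b))"
      unfolding Lneg trip_add[OF be al hbl] trip_smult[OF be bl] a(2) b(2) .
    show "z' = z"
    proof (intro ext)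
      fix x i
      have h1: "- e x i = a x i + (1/2) * b x i" using fun_cong[OF fun_cong[OF eq1, of x], of i]
        by (simp add: op_neg_def op_add_def op_smult_def)
      have h2: "- e x i = a x i + (1/2) * ((1/2) * b x i)" using fun_cong[OF fun_cong[OF eq2, of x], of i]
        by (simp add: op_neg_def op_add_def op_smult_def)
      have h3: "w x i = (a x i + b x i) + z' x i" using fun_cong[OF fun_cong[OF wd, of x], of i]
        by (simp add: op_add_def)
      from h1 h2 have b0: "b x i = 0" by simp
      have ha: "a x i = - e x i" using h1 b0 by simp
      have "z' x i = w x i - a x i" using h3 b0 by simp
      thus "z' x i = z x i" by (simp add: z_def op_add_def ha)
    qed
  qed
  have "P0 ?A e w = z" unfolding P0_def by (rule the_equality) (use P U in blast)+
  thus ?thesis by (simp add: z_def op_add_def op_neg_def)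
qed


end
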